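(* In the parametrized changepoint model of the context, assume $f(y\mid x;\theta^f)=\eta'(\theta^f)^tT'(x,y)+A'(\theta^f)$ with functions $\eta':\Theta^f\to\mathbb R^v$, $A':\Theta^f\to\mathbb R$ and measurable $T':\mathbb X\times\mathbb Y\to\mathbb R^v$. For $0<i\le n$, $0\le j\le i$ and $\ell=1,\dots,v$ let $$o^\ell_{ji}=\int\sum_{k=\max(j,1)}^iT'_\ell(x,y_k)\,H_{ji}(dx),$$ where $H_{ji}$ is computed under $\theta_{old}$. Then any $\theta^f\in\Theta^f$ maximizing $$nA'(\theta^f)+\sum_{\ell=1}^v\eta'_\ell(\theta^f)\Big(\sum_{i=1}^{n-1}\sum_{j=0}^i\tilde c_{ji}\,\tilde q_{i+1}\,o^\ell_{ji}+\sum_{j=0}^n\tilde c_{jn}\,o^\ell_{jn}\Big)$$ is a maximizer of $\theta^f\mapsto\mathbb E\big[\sum_{i=1}^nf(y_i\mid X_i;\theta^f)\mid Y_{1:n}=y_{1:n};\theta_{old}\big]$, i.e. a candidate for the new value $\theta^f_{new}$ in the EM step.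
   Context: Model: fix $n\ge1$ and data $y_1,\dots,y_n$; $(\mathbb X,\mathcal X)$, $(\mathbb Y,\mathcal Y)$ standard Borel, $\psi$ $\sigma$-finite on $\mathbb Y$, $\mathcal J$ a probability measure on $\mathbb X$, $q_{ji}\in[0,1]$ for $0\le j<i\le n$. Random variables $C_i\in\{0,\dots,i\}$, $X_i\in\mathbb X$, $Y_i\in\mathbb Y$: $P(C_1=0)=q_{01}$, $P(C_1=1)=1-q_{01}$; for $i\ge2$, $C_i$ depends on the past only through $C_{i-1}$ with $P(C_i=j\mid C_{i-1}=j)=q_{ji}$, $P(C_i=i\mid C_{i-1}=j)=1-q_{ji}$; $X_1\sim\mathcal J$; for $i\ge2$, $X_i\sim\mathcal J$ (fresh) if $C_i=i$ and $X_i=X_{i-1}$ if $C_i<i$; $Y_i$ depends on all other variables only through $X_i$, with density $p(Y_i=y\mid X_i=x;\theta^f)$ w.r.t. $\psi$, of the same form for all $i$, depending on a parameter $\theta^f\in\Theta^f$ that appears nowhere else; $f(y\mid x;\theta^f)=\ln p(Y_i=y\mid X_i=x;\theta^f)$. Assume $\int\prod_{\ell=j}^ip(Y_\ell=y_\ell\mid X_\ell=x)\mathcal J(dx)>0$ for $0<j\le i\le n$. EM setting: $\theta_{old}$ is the current value of all parameters; all posterior quantities below are computed in the model with $\theta_{old}$: $H_{ji}=P(X_i\in\cdot\mid C_i=j,Y_{1:i}=y_{1:i})$; $\tilde c_{ji}=P(C_i=j\mid C_{i+1}=i+1,Y_{1:i}=y_{1:i})$ for $0<i<n$ and $\tilde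 c_{jn}=P(C_n=j\mid Y_{1:n}=y_{1:n})$; $\tilde q_i=P(C_i=i\mid Y_{1:n}=y_{1:n})$. Expectations are assumed finite. *)

theory Defs
  imports "HOL-Probability.Probability"
begin

text \<open>Changepoint paths c (c i = C_i for 1 <= i <= n), normalised by c i = 0 outside {1..n}.\<close>
definition cp_paths :: "nat \<Rightarrow> (nat \<Rightarrow> nat) set" where
  "cp_paths n = {c. (\<forall>i. c i \<le> i) \<and> (\<forall>i. i \<notin> {1..n} \<longrightarrow> c i = 0)}"

text \<open>P(C_i = b | C_(i-1) = a); for i = 1 with the convention C_0 = 0 this gives
  P(C_1 = 0) = q 0 1 and P(C_1 = 1) = 1 - q 0 1.\<close>
definition cp_trans :: "(nat \<Rightarrow> nat \<Rightarrow> real) \<Rightarrow> nat \<Rightarrow> nat \<Rightarrow> nat \<Rightarrow> real" where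
  "cp_trans q i a b = (if b = a then q a i else if b = i then 1 - q a i else 0)"

definition cp_path_prob :: "(nat \<Rightarrow> nat \<Rightarrow> real) \<Rightarrow> nat \<Rightarrow> (nat \<Rightarrow> nat) \<Rightarrow> real" where
  "cp_path_prob q n c = (\<Prod>i\<in>{1..n}. cp_trans q i (c (i - 1)) (c i))"

text \<open>Joint prior law of (C_1..C_n, fresh draws Z_1..Z_n iid J).  X_i = Z_(max C_i 1),
  i.e. X_i is the fresh draw of the segment containing i.\<close>
definition cp_prior :: "(nat \<Rightarrow> nat \<Rightarrow> real) \<Rightarrow> 'x measure \<Rightarrow> nat \<Rightarrow> ((nat \<Rightarrow> nat) \<times> (nat \<Rightarrow> 'x)) measure" where
  "cp_prior q J n =
     density (count_space (cp_paths n)) (\<lambda>c. ennreal (cp_path_prob q n c))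
       \<Otimes>\<^sub>M PiM {1..n} (\<lambda>_. J)"

definition cpC :: "nat \<Rightarrow> (nat \<Rightarrow> nat) \<times> (nat \<Rightarrow> 'x) \<Rightarrow> nat" where
  "cpC i \<omega> = fst \<omega> i"

definition cpX :: "nat \<Rightarrow> (nat \<Rightarrow> nat) \<times> (nat \<Rightarrow> 'x) \<Rightarrow> 'x" where
  "cpX i \<omega> = snd \<omega> (max (fst \<omega> i) 1)"

text \<open>Likelihood of Y_(1:i) = y_(1:i) given the latent variables (p y x = p(Y=y | X=x)).\<close>
definition cp_lik :: "('y \<Rightarrow> 'x \<Rightarrow> real) \<Rightarrow> (nat \<Rightarrow> 'y) \<Rightarrow> nat \<Rightarrow> (nat \<Rightarrow> nat) \<times> (nat \<Rightarrow> 'x) \<Rightarrow> real" where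
  "cp_lik p y i \<omega> = (\<Prod>k\<in>{1..i}. p (y k) (cpX k \<omega>))"

definition cond_measure :: "'a measure \<Rightarrow> 'a set \<Rightarrow> 'a measure" where
  "cond_measure M B = density M (\<lambda>\<omega>. indicator B \<omega> / emeasure M B)"

definition cp_post ::
  "(nat \<Rightarrow> nat \<Rightarrow> real) \<Rightarrow> 'x measure \<Rightarrow> ('y \<Rightarrow> 'x \<Rightarrow> real) \<Rightarrow> (nat \<Rightarrow> 'y) \<Rightarrow> nat \<Rightarrow> nat
     \<Rightarrow> ((nat \<Rightarrow> nat) \<times> (nat \<Rightarrow> 'x)) measure" where
  "cp_post q J p y n i =
     (let W = density (cp_prior q J n) (\<lambda>\<omega>. ennreal (cp_lik p y i \<omega>)) in cond_measure W (space W))"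

definition cp_event :: "(nat \<Rightarrow> nat \<Rightarrow> real) \<Rightarrow> 'x measure \<Rightarrow> nat \<Rightarrow> nat \<Rightarrow> nat
     \<Rightarrow> ((nat \<Rightarrow> nat) \<times> (nat \<Rightarrow> 'x)) set" where
  "cp_event q J n i j = {\<omega> \<in> space (cp_prior q J n). cpC i \<omega> = j}"

text \<open>H_ji = P(X_i \<in> . | C_i = j, Y_(1:i) = y_(1:i)).\<close>
definition cp_H :: "(nat \<Rightarrow> nat \<Rightarrow> real) \<Rightarrow> 'x measure \<Rightarrow> ('y \<Rightarrow> 'x \<Rightarrow> real) \<Rightarrow> (nat \<Rightarrow> 'y) \<Rightarrow> nat
     \<Rightarrow> nat \<Rightarrow> nat \<Rightarrow> 'x measure" where
  "cp_H q J p y n j i = distr (cond_measure (cp_post q J p y n i) (cp_event q J n i j)) J (cpX i)"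

text \<open>c~_ji = P(C_i = j | C_(i+1) = i+1, Y_(1:i) = y_(1:i)) for i < n,
  c~_jn = P(C_n = j | Y_(1:n) = y_(1:n)).\<close>
definition cp_ctil :: "(nat \<Rightarrow> nat \<Rightarrow> real) \<Rightarrow> 'x measure \<Rightarrow> ('y \<Rightarrow> 'x \<Rightarrow> real) \<Rightarrow> (nat \<Rightarrow> 'y) \<Rightarrow> nat
     \<Rightarrow> nat \<Rightarrow> nat \<Rightarrow> real" where
  "cp_ctil q J p y n j i =
     (if i < n then measure (cond_measure (cp_post q J p y n i) (cp_event q J n (i + 1) (i + 1))) (cp_event q J n i j)
      else measure (cp_post q J p y n n) (cp_event q J n n j))"

text \<open>q~_i = P(C_i = i | Y_(1:n) = y_(1:n)).\<close>
definition cp_qtil :: "(nat \<Rightarrow> nat \<Rightarrow> real) \<Rightarrow> 'x measure \<Rightarrow> ('y \<Rightarrow> 'x \<Rightarrow> real) \<Rightarrow> (nat \<Rightarrow> 'y) \<Rightarrow> nat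
     \<Rightarrow> nat \<Rightarrow> real" where
  "cp_qtil q J p y n i = measure (cp_post q J p y n n) (cp_event q J n i i)"

end

theory Submission
  imports Defs
begin

definition mx :: "nat \<Rightarrow> nat" where "mx t = max t 1"
definition cvalid :: "nat \<Rightarrow> (nat \<Rightarrow> nat) \<Rightarrow> bool" where
  "cvalid n c = (\<forall>k\<in>{1..n}. c k = c (k - 1) \<or> c k = k)"
definition mg :: "nat \<Rightarrow> (nat \<Rightarrow> nat) \<Rightarrow> (nat \<Rightarrow> nat) \<Rightarrow> (nat \<Rightarrow> nat)" where
  "mg i c c' = (\<lambda>k. if k \<le> i then c k else c' k)"
definition rs :: "nat \<Rightarrow> (nat \<Rightarrow> nat) \<Rightarrow> (nat \<Rightarrow> nat)" where
  "rs m c = (\<lambda>k. if k \<le> m then c k else 0)"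

lemma cp_paths_finite: "finite (cp_paths n)"
proof -
  have "cp_paths n \<subseteq> (\<lambda>f k. if k \<in> {1..n} then f k else 0) ` (PiE {1..n} (\<lambda>k. {0..k}))"
  proof
    fix c assume c: "c \<in> cp_paths n"
    show "c \<in> (\<lambda>f k. if k \<in> {1..n} then f k else 0) ` (PiE {1..n} (\<lambda>k. {0..k}))"
    proof (rule image_eqI[where x="restrict c {1..n}"])
      show "c = (\<lambda>k. if k \<in> {1..n} then restrict c {1..n} k else 0)"
        using c by (auto simp: cp_paths_def)
      show "restrict c {1..n} \<in> PiE {1..n} (\<lambda>k. {0..k})"
        using c by (auto simp: cp_paths_def)
    qed
  qed
  moreover have "finite (PiE {1..n} (\<lambda>k. {0..k::nat}))" by (intro finite_PiE) auto
  ultimately show ?thesis using finite_surj by blast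
qed

lemma cp_paths_le: "c \<in> cp_paths n \<Longrightarrow> c k \<le> k"
  by (auto simp: cp_paths_def)

lemma cp_paths_0: "c \<in> cp_paths n \<Longrightarrow> k \<notin> {1..n} \<Longrightarrow> c k = 0"
  by (auto simp: cp_paths_def)

lemma cp_trans_nonneg:
  assumes "\<forall>i j. j < i \<and> i \<le> n \<longrightarrow> 0 \<le> q j i \<and> q j i \<le> 1" "a < k" "k \<le> n"
  shows "0 \<le> cp_trans q k a b"
  using assms by (auto simp: cp_trans_def)

lemma path_prob_nonneg:
  assumes "\<forall>i j. j < i \<and> i \<le> n \<longrightarrow> 0 \<le> q j i \<and> q j i \<le> 1" "m \<le> n" "\<forall>k. c k \<le> k"
  shows "0 \<le> cp_path_prob q m c"
  unfolding cp_path_prob_def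
proof (rule prod_nonneg)
  fix k assume k: "k \<in> {1..m}"
  have "c (k - 1) < k" using assms(3)[rule_format, of "k-1"] k by auto
  then show "0 \<le> cp_trans q k (c (k - 1)) (c k)"
    using cp_trans_nonneg[OF assms(1)] k assms(2) by auto
qed

lemma path_prob_valid:
  assumes "cp_path_prob q n c \<noteq> 0"
  shows "cvalid n c"
  using assms unfolding cp_path_prob_def cvalid_def cp_trans_def
  by (auto split: if_splits)

lemma cvalid_mono_step:
  assumes "cvalid n c" "\<forall>k. c k \<le> k" "k \<in> {1..n}"
  shows "c (k - 1) \<le> c k"
proof -
  have "c (k-1) \<le> k - 1" using assms(2) by auto
  then show ?thesis using assms(1,3) unfolding cvalid_def by force
qed

lemma cvalid_mono:
  assumes "cvalid n c" "\<forall>k. c k \<le> k" "a \<le> b" "b \<le> n"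
  shows "c a \<le> c b"
  using assms(3,4)
proof (induction b)
  case 0 then show ?case by simp
next
  case (Suc b)
  show ?case
  proof (cases "a = Suc b")
    case True then show ?thesis by simp
  next
    case False
    then have "c a \<le> c b" using Suc by auto
    also have "c b \<le> c (Suc b)" using cvalid_mono_step[OF assms(1,2), of "Suc b"] Suc by auto
    finally show ?thesis .
  qed
qed

lemma cvalid_start:
  assumes "cvalid n c" "\<forall>k. c k \<le> k" "k \<le> n" "c k = s" "1 \<le> s"
  shows "c s = s"
  using assms(3,4)
proof (induction k)
  case 0 then show ?case using assms(2)[rule_format, of 0] assms(5) by simp
next
  case (Suc k)
  show ?case
  proof (cases "c (Suc k) = Suc k")
    case True then show ?thesis using Suc by simp
  next
    case False
    then have "c (Suc k) = c k" using assms(1) Suc(2) unfolding cvalid_def by force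
    then show ?thesis using Suc by simp
  qed
qed

lemma cvalid_after:
  assumes "cvalid n c" "\<forall>k. c k \<le> k" "c (i + 1) = i + 1" "i + 1 \<le> k" "k \<le> n"
  shows "i + 1 \<le> c k"
  using cvalid_mono[OF assms(1,2) assms(4,5)] assms(3) by simp

lemma mx_le: "1 \<le> k \<Longrightarrow> c k \<le> k \<Longrightarrow> mx (c k) \<le> k"
  by (simp add: mx_def)

lemma fiber_interval:
  assumes "cvalid n c" "\<forall>k. c k \<le> k" "m \<le> n" "{k\<in>{1..m}. mx (c k) = s} \<noteq> {}"
  shows "\<exists>e. 1 \<le> s \<and> s \<le> e \<and> e \<le> m \<and> {k\<in>{1..m}. mx (c k) = s} = {s..e}"
proof -
  let ?F = "{k\<in>{1..m}. mx (c k) = s}"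
  define e where "e = Max ?F"
  have fin: "finite ?F" by simp
  have eF: "e \<in> ?F" using assms(4) fin unfolding e_def by (intro Max_in) auto
  have s1: "1 \<le> s" using eF by (auto simp: mx_def)
  have le: "s \<le> k" if "k \<in> ?F" for k
  proof -
    have "c k \<le> k" using assms(2) by blast
    then show ?thesis using that by (auto simp: mx_def max_def split: if_splits)
  qed
  have sF: "s \<in> ?F"
  proof (cases "s = 1")
    case True
    have "c 1 \<le> 1" using assms(2) by auto
    then show ?thesis using True eF by (auto simp: mx_def)
  next
    case False
    then have "c e = s" using eF by (auto simp: mx_def)
    then have "c s = s" using cvalid_start[OF assms(1,2), of e s] eF s1 assms(3) by auto
    then show ?thesis using le[OF eF] eF s1 by (auto simp: mx_def)
  qed
  have "?F = {s..e}"
  proof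
    show "?F \<subseteq> {s..e}"
    proof
      fix k assume k: "k \<in> ?F"
      have "s \<le> k" using le[OF k] .
      moreover have "k \<le> e" unfolding e_def using fin k by (rule Max_ge)
      ultimately show "k \<in> {s..e}" by simp
    qed
    show "{s..e} \<subseteq> ?F"
    proof
      fix k assume k: "k \<in> {s..e}"
      have "c s \<le> c k" using cvalid_mono[OF assms(1,2), of s k] k eF assms(3) by auto
      moreover have "c k \<le> c e" using cvalid_mono[OF assms(1,2), of k e] k eF assms(3) by auto
      ultimately have "mx (c s) \<le> mx (c k)" "mx (c k) \<le> mx (c e)" by (auto simp: mx_def)
      then show "k \<in> ?F" using sF eF k s1 by auto
    qed
  qed
  moreover have "e \<le> m" using eF by simp
  moreover have "s \<le> e" using le[OF eF] .
  ultimately show ?thesis using s1 by blast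
qed

lemma paths_Suc_sum:
  "(\<Sum>c\<in>cp_paths (Suc m). \<phi> c) = (\<Sum>c\<in>cp_paths m. \<Sum>b\<in>{0..Suc m}. \<phi> (c(Suc m := b)))"
proof -
  have "(\<Sum>c\<in>cp_paths m. \<Sum>b\<in>{0..Suc m}. \<phi> (c(Suc m := b)))
      = (\<Sum>cb\<in>Sigma (cp_paths m) (\<lambda>_. {0..Suc m}). \<phi> ((fst cb)(Suc m := snd cb)))"
    by (subst sum.Sigma) (auto simp: cp_paths_finite case_prod_beta)
  also have "\<dots> = (\<Sum>c\<in>cp_paths (Suc m). \<phi> c)"
  proof (rule sum.reindex_bij_witness[where j="\<lambda>cb. (fst cb)(Suc m := snd cb)"
        and i="\<lambda>c. (c(Suc m := 0), c (Suc m))"])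
    fix a assume a: "a \<in> Sigma (cp_paths m) (\<lambda>_. {0..Suc m})"
    then have "fst a (Suc m) = 0" by (auto simp: cp_paths_def)
    then show "(((fst a)(Suc m := snd a))(Suc m := 0), ((fst a)(Suc m := snd a)) (Suc m)) = a"
      by (cases a) auto
    show "(fst a)(Suc m := snd a) \<in> cp_paths (Suc m)"
      using a by (auto simp: cp_paths_def)
  next
    fix b assume b: "b \<in> cp_paths (Suc m)"
    show "(fst (b(Suc m := 0), b (Suc m)))(Suc m := snd (b(Suc m := 0), b (Suc m))) = b" by simp
    show "(b(Suc m := 0), b (Suc m)) \<in> Sigma (cp_paths m) (\<lambda>_. {0..Suc m})"
      using b by (auto simp: cp_paths_def)
  qed simp
  finally show ?thesis by simp
qed

lemma path_prob_cong:
  assumes "\<And>k. k \<le> m \<Longrightarrow> c k = c' k"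
  shows "cp_path_prob q m c = cp_path_prob q m c'"
  unfolding cp_path_prob_def using assms by (intro prod.cong) auto

lemma path_prob_Suc:
  assumes "c \<in> cp_paths m"
  shows "cp_path_prob q (Suc m) (c(Suc m := b)) = cp_path_prob q m c * cp_trans q (Suc m) (c m) b"
proof -
  have "cp_path_prob q (Suc m) (c(Suc m := b))
     = cp_trans q (Suc m) (c m) b * (\<Prod>k\<in>{1..m}. cp_trans q k ((c(Suc m := b)) (k - 1)) ((c(Suc m := b)) k))"
    unfolding cp_path_prob_def by (subst prod.nat_ivl_Suc') auto
  also have "(\<Prod>k\<in>{1..m}. cp_trans q k ((c(Suc m := b)) (k - 1)) ((c(Suc m := b)) k)) = cp_path_prob q m c"
    unfolding cp_path_prob_def by (intro prod.cong) auto
  finally show ?thesis by (simp add: mult.commute fun_upd_def)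
qed

lemma trans_sum:
  assumes "a < k"
  shows "(\<Sum>b\<in>{0..k}. cp_trans q k a b) = 1"
proof -
  have "(\<Sum>b\<in>{0..k}. cp_trans q k a b) = (\<Sum>b\<in>{0..k}. (if b = a then q a k else 0) + (if b = k then 1 - q a k else 0))"
    using assms by (intro sum.cong) (auto simp: cp_trans_def)
  also have "\<dots> = q a k + (1 - q a k)"
    using assms by (simp add: sum.distrib)
  finally show ?thesis by simp
qed

lemma rs_upd: "m < k \<Longrightarrow> rs m (c(k := b)) = rs m c"
  by (auto simp: rs_def)

lemma marg_aux:
  assumes qr: "\<forall>i j. j < i \<and> i \<le> n \<longrightarrow> 0 \<le> q j i \<and> q j i \<le> 1"
    and dep: "\<forall>c. \<phi> (rs m c) = \<phi> c"
  shows "m \<le> n' \<Longrightarrow> n' \<le> n \<Longrightarrow>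
    (\<Sum>c\<in>cp_paths n'. ennreal (cp_path_prob q n' c) * \<phi> c) = (\<Sum>c\<in>cp_paths m. ennreal (cp_path_prob q m c) * \<phi> c)"
proof (induction n')
  case 0 then show ?case by simp
next
  case (Suc n')
  show ?case
  proof (cases "m = Suc n'")
    case True then show ?thesis by simp
  next
    case False
    then have mn: "m \<le> n'" using Suc by simp
    have "(\<Sum>c\<in>cp_paths (Suc n'). ennreal (cp_path_prob q (Suc n') c) * \<phi> c)
        = (\<Sum>c\<in>cp_paths n'. \<Sum>b\<in>{0..Suc n'}. ennreal (cp_path_prob q (Suc n') (c(Suc n' := b))) * \<phi> (c(Suc n' := b)))"
      by (rule paths_Suc_sum)
    also have "\<dots> = (\<Sum>c\<in>cp_paths n'. ennreal (cp_path_prob q n' c) * \<phi> c)"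
    proof (rule sum.cong[OF refl])
      fix c assume c: "c \<in> cp_paths n'"
      have cn: "c n' < Suc n'" using cp_paths_le[OF c, of n'] by simp
      have phi: "\<phi> (c(Suc n' := b)) = \<phi> c" for b
      proof -
        have "\<phi> (c(Suc n' := b)) = \<phi> (rs m (c(Suc n' := b)))" using dep by simp
        also have "\<dots> = \<phi> (rs m c)" using rs_upd[of m "Suc n'" c b] mn by simp
        also have "\<dots> = \<phi> c" using dep by simp
        finally show ?thesis .
      qed
      have pn: "0 \<le> cp_path_prob q n' c"
        using path_prob_nonneg[OF qr, of n' c] Suc(3) cp_paths_le[OF c] by auto
      have tn: "0 \<le> cp_trans q (Suc n') (c n') b" for b
        using cp_trans_nonneg[OF qr cn] Suc(3) by auto
      have "(\<Sum>b\<in>{0..Suc n'}. ennreal (cp_path_prob q (Suc n') (c(Suc n' := b))) * \<phi> (c(Suc n' := b)))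
          = (\<Sum>b\<in>{0..Suc n'}. ennreal (cp_path_prob q n' c) * \<phi> c * ennreal (cp_trans q (Suc n') (c n') b))"
        using c pn tn by (intro sum.cong) (auto simp: path_prob_Suc phi ennreal_mult mult_ac)
      also have "\<dots> = ennreal (cp_path_prob q n' c) * \<phi> c * (\<Sum>b\<in>{0..Suc n'}. ennreal (cp_trans q (Suc n') (c n') b))"
        by (rule sum_distrib_left[symmetric])
      also have "(\<Sum>b\<in>{0..Suc n'}. ennreal (cp_trans q (Suc n') (c n') b)) = 1"
        using tn trans_sum[OF cn] by (subst sum_ennreal) auto
      finally show "(\<Sum>b\<in>{0..Suc n'}. ennreal (cp_path_prob q (Suc n') (c(Suc n' := b))) * \<phi> (c(Suc n' := b)))
          = ennreal (cp_path_prob q n' c) * \<phi> c" by (simp only: mult_1_right)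
    qed
    also have "\<dots> = (\<Sum>c\<in>cp_paths m. ennreal (cp_path_prob q m c) * \<phi> c)"
      using Suc mn by simp
    finally show ?thesis .
  qed
qed

lemma marg:
  assumes qr: "\<forall>i j. j < i \<and> i \<le> n \<longrightarrow> 0 \<le> q j i \<and> q j i \<le> 1"
    and dep: "\<forall>c. \<phi> (rs m c) = \<phi> c" and "m \<le> n"
  shows "(\<Sum>c\<in>cp_paths n. ennreal (cp_path_prob q n c) * \<phi> c) = (\<Sum>c\<in>cp_paths m. ennreal (cp_path_prob q m c) * \<phi> c)"
  by (rule marg_aux[OF qr dep]) (use assms(3) in auto)

lemma step_marg:
  assumes qr: "\<forall>i j. j < i \<and> i \<le> n \<longrightarrow> 0 \<le> q j i \<and> q j i \<le> 1"
    and dep: "\<forall>c. \<phi> (rs i c) = \<phi> c" and "i < n"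
  shows "(\<Sum>c\<in>cp_paths n. ennreal (cp_path_prob q n c) * (if c (Suc i) = Suc i then \<phi> c else 0))
       = (\<Sum>c\<in>cp_paths n. ennreal (cp_path_prob q n c) * (ennreal (1 - q (c i) (Suc i)) * \<phi> c))"
proof -
  have d1: "\<forall>c. (\<lambda>c. if c (Suc i) = Suc i then \<phi> c else 0) (rs (Suc i) c) = (if c (Suc i) = Suc i then \<phi> c else 0)"
  proof
    fix c
    have "rs i (rs (Suc i) c) = rs i c" by (auto simp: rs_def)
    then have "\<phi> (rs (Suc i) c) = \<phi> c" using dep by metis
    then show "(\<lambda>c. if c (Suc i) = Suc i then \<phi> c else 0) (rs (Suc i) c) = (if c (Suc i) = Suc i then \<phi> c else 0)"
      by (simp add: rs_def)
  qed
  have d2: "\<forall>c. (\<lambda>c. ennreal (1 - q (c i) (Suc i)) * \<phi> c) (rs i c) = ennreal (1 - q (c i) (Suc i)) * \<phi> c"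
    using dep by (auto simp: rs_def)
  have "(\<Sum>c\<in>cp_paths n. ennreal (cp_path_prob q n c) * (if c (Suc i) = Suc i then \<phi> c else 0))
      = (\<Sum>c\<in>cp_paths (Suc i). ennreal (cp_path_prob q (Suc i) c) * (if c (Suc i) = Suc i then \<phi> c else 0))"
    using marg[OF qr d1] assms(3) by simp
  also have "\<dots> = (\<Sum>c\<in>cp_paths i. \<Sum>b\<in>{0..Suc i}. ennreal (cp_path_prob q (Suc i) (c(Suc i := b))) *
        (if (c(Suc i := b)) (Suc i) = Suc i then \<phi> (c(Suc i := b)) else 0))"
    by (rule paths_Suc_sum)
  also have "\<dots> = (\<Sum>c\<in>cp_paths i. ennreal (cp_path_prob q i c) * (ennreal (1 - q (c i) (Suc i)) * \<phi> c))"
  proof (rule sum.cong[OF refl])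
    fix c assume c: "c \<in> cp_paths i"
    have cn: "c i < Suc i" using cp_paths_le[OF c, of i] by simp
    have phi: "\<phi> (c(Suc i := b)) = \<phi> c" for b
    proof -
      have "\<phi> (c(Suc i := b)) = \<phi> (rs i (c(Suc i := b)))" using dep by simp
      also have "\<dots> = \<phi> (rs i c)" using rs_upd[of i "Suc i" c b] by simp
      also have "\<dots> = \<phi> c" using dep by simp
      finally show ?thesis .
    qed
    have pn: "0 \<le> cp_path_prob q i c"
      using path_prob_nonneg[OF qr, of i c] assms(3) cp_paths_le[OF c] by auto
    have tn: "0 \<le> 1 - q (c i) (Suc i)" using qr cn assms(3) by auto
    have "(\<Sum>b\<in>{0..Suc i}. ennreal (cp_path_prob q (Suc i) (c(Suc i := b))) *
        (if (c(Suc i := b)) (Suc i) = Suc i then \<phi> (c(Suc i := b)) else 0))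
        = (\<Sum>b\<in>{0..Suc i}. if b = Suc i then ennreal (cp_path_prob q (Suc i) (c(Suc i := b))) * \<phi> c else 0)"
      by (intro sum.cong) (auto simp: phi)
    also have "\<dots> = ennreal (cp_path_prob q (Suc i) (c(Suc i := Suc i))) * \<phi> c"
      by (subst sum.delta) auto
    also have "\<dots> = ennreal (cp_path_prob q i c) * (ennreal (1 - q (c i) (Suc i)) * \<phi> c)"
      using c pn tn cn by (simp add: path_prob_Suc cp_trans_def ennreal_mult mult_ac)
    finally show "(\<Sum>b\<in>{0..Suc i}. ennreal (cp_path_prob q (Suc i) (c(Suc i := b))) *
        (if (c(Suc i := b)) (Suc i) = Suc i then \<phi> (c(Suc i := b)) else 0))
        = ennreal (cp_path_prob q i c) * (ennreal (1 - q (c i) (Suc i)) * \<phi> c)" .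
  qed
  also have "\<dots> = (\<Sum>c\<in>cp_paths n. ennreal (cp_path_prob q n c) * (ennreal (1 - q (c i) (Suc i)) * \<phi> c))"
    using marg[OF qr d2] assms(3) by simp
  finally show ?thesis .
qed

lemma mg_paths:
  assumes "c \<in> cp_paths n" "c' \<in> cp_paths n"
  shows "mg i c c' \<in> cp_paths n"
  using assms by (auto simp: cp_paths_def mg_def)

lemma path_prob_split:
  assumes "Suc i \<le> n"
  shows "cp_path_prob q n c = (\<Prod>k\<in>{1..Suc i}. cp_trans q k (c (k - 1)) (c k)) * (\<Prod>k\<in>{Suc (Suc i)..n}. cp_trans q k (c (k - 1)) (c k))"
proof -
  have "{1..n} = {1..Suc i} \<union> {Suc (Suc i)..n}" using assms by auto
  then show ?thesis unfolding cp_path_prob_def by (subst prod.union_disjoint[symmetric]) auto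
qed

lemma path_prob_mg:
  assumes "Suc i \<le> n" "c (Suc i) = c' (Suc i)"
  shows "cp_path_prob q n (mg i c c') * cp_path_prob q n (mg i c' c) = cp_path_prob q n c * cp_path_prob q n c'"
proof -
  have a: "(\<Prod>k\<in>{1..Suc i}. cp_trans q k (mg i x x' (k - 1)) (mg i x x' k)) = (\<Prod>k\<in>{1..Suc i}. cp_trans q k (x (k - 1)) (x k))"
    if "x (Suc i) = x' (Suc i)" for x x'
    using that by (intro prod.cong) (auto simp: mg_def le_Suc_eq)
  have b: "(\<Prod>k\<in>{Suc (Suc i)..n}. cp_trans q k (mg i x x' (k - 1)) (mg i x x' k)) = (\<Prod>k\<in>{Suc (Suc i)..n}. cp_trans q k (x' (k - 1)) (x' k))"
    for x x'
    by (intro prod.cong) (auto simp: mg_def)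
  define A where "A x = (\<Prod>k\<in>{1..Suc i}. cp_trans q k (x (k - 1)) (x k))" for x :: "nat \<Rightarrow> nat"
  define B where "B x = (\<Prod>k\<in>{Suc (Suc i)..n}. cp_trans q k (x (k - 1)) (x k))" for x :: "nat \<Rightarrow> nat"
  have e1: "cp_path_prob q n (mg i c c') = A c * B c'"
    unfolding path_prob_split[OF assms(1), of q "mg i c c'"] a[where x=c and x'=c', OF assms(2)] b A_def B_def ..
  have e2: "cp_path_prob q n (mg i c' c) = A c' * B c"
    unfolding path_prob_split[OF assms(1), of q "mg i c' c"] a[where x=c' and x'=c, OF assms(2)[symmetric]] b A_def B_def ..
  have e3: "cp_path_prob q n c = A c * B c" "cp_path_prob q n c' = A c' * B c'"
    using path_prob_split[OF assms(1)] unfolding A_def B_def by auto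
  show ?thesis unfolding e1 e2 e3 by (simp add: ac_simps)
qed

lemma swap_sum:
  assumes qr: "\<forall>i j. j < i \<and> i \<le> n \<longrightarrow> 0 \<le> q j i \<and> q j i \<le> 1" and "i < n"
    and a1: "\<forall>c c'. a1 (mg i c c') = a1 c" and a2: "\<forall>c c'. a2 (mg i c c') = a2 c"
    and b: "\<forall>c c'. b (mg i c c') = b c'"
  defines "S \<equiv> {c\<in>cp_paths n. c (Suc i) = Suc i}"
  shows "(\<Sum>c\<in>S. ennreal (cp_path_prob q n c) * a1 c * b c) * (\<Sum>c\<in>S. ennreal (cp_path_prob q n c) * a2 c)
       = (\<Sum>c\<in>S. ennreal (cp_path_prob q n c) * a1 c) * (\<Sum>c\<in>S. ennreal (cp_path_prob q n c) * a2 c * b c)"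
proof -
  let ?p = "\<lambda>c. ennreal (cp_path_prob q n c)"
  have finS: "finite S" unfolding S_def using cp_paths_finite by simp
  have pn: "c \<in> S \<Longrightarrow> 0 \<le> cp_path_prob q n c" for c
    using path_prob_nonneg[OF qr, of n c] cp_paths_le[of c n] unfolding S_def by auto
  have mgS: "c \<in> S \<Longrightarrow> c' \<in> S \<Longrightarrow> mg i c c' \<in> S" for c c'
    unfolding S_def using mg_paths by (auto simp: mg_def)
  have pmg: "?p (mg i c c') * ?p (mg i c' c) = ?p c * ?p c'" if "c \<in> S" "c' \<in> S" for c c'
  proof -
    have "cp_path_prob q n (mg i c c') * cp_path_prob q n (mg i c' c) = cp_path_prob q n c * cp_path_prob q n c'"
      using path_prob_mg[of i n c c' q] that assms(2) unfolding S_def by auto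
    then show ?thesis using pn that mgS by (simp add: ennreal_mult[symmetric])
  qed
  have "(\<Sum>c\<in>S. ?p c * a1 c * b c) * (\<Sum>c\<in>S. ?p c * a2 c)
      = (\<Sum>x\<in>S \<times> S. ?p (fst x) * a1 (fst x) * b (fst x) * (?p (snd x) * a2 (snd x)))"
    by (simp add: sum_product sum.cartesian_product case_prod_beta)
  also have "\<dots> = (\<Sum>x\<in>S \<times> S. ?p (fst x) * a1 (fst x) * (?p (snd x) * a2 (snd x) * b (snd x)))"
  proof (rule sum.reindex_bij_witness[where i="\<lambda>x. (mg i (fst x) (snd x), mg i (snd x) (fst x))"
        and j="\<lambda>x. (mg i (fst x) (snd x), mg i (snd x) (fst x))"], goal_cases)
    case (1 x) then show ?case by (cases x) (simp add: mg_def fun_eq_iff)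
  next
    case (2 x) then show ?case using mgS by auto
  next
    case (3 x) then show ?case by (cases x) (simp add: mg_def fun_eq_iff)
  next
    case (4 x) then show ?case using mgS by auto
  next
    case (5 x)
    have "?p (mg i (fst x) (snd x)) * a1 (mg i (fst x) (snd x)) *
          (?p (mg i (snd x) (fst x)) * a2 (mg i (snd x) (fst x)) * b (mg i (snd x) (fst x)))
        = (?p (mg i (fst x) (snd x)) * ?p (mg i (snd x) (fst x))) * a1 (fst x) * a2 (snd x) * b (fst x)"
      using a1 a2 b by (simp add: mult_ac)
    also have "\<dots> = ?p (fst x) * a1 (fst x) * b (fst x) * (?p (snd x) * a2 (snd x))"
    proof -
      have xs: "fst x \<in> S" "snd x \<in> S" using 5 by auto
      show ?thesis unfolding pmg[OF xs] by (simp only: ac_simps)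
    qed
    finally show ?case by (simp only: fst_conv snd_conv)
  qed
  also have "\<dots> = (\<Sum>c\<in>S. ?p c * a1 c) * (\<Sum>c\<in>S. ?p c * a2 c * b c)"
    by (simp add: sum_product sum.cartesian_product case_prod_beta)
  finally show ?thesis .
qed

locale cpm =
  fixes q :: "nat \<Rightarrow> nat \<Rightarrow> real" and J :: "'x measure" and p :: "'y \<Rightarrow> 'x \<Rightarrow> real"
    and y :: "nat \<Rightarrow> 'y" and n :: nat
  assumes qr: "\<forall>i j. j < i \<and> i \<le> n \<longrightarrow> 0 \<le> q j i \<and> q j i \<le> 1"
    and J: "prob_space J"
    and pm: "\<And>k. k \<in> {1..n} \<Longrightarrow> p (y k) \<in> borel_measurable J"
    and ppos: "\<And>k x. 0 < p (y k) x"
    and segfin: "\<forall>j i. 0 < j \<and> j \<le> i \<and> i \<le> n \<longrightarrow> (\<integral>\<^sup>+ x. ennreal (\<Prod>l=j..i. p (y l) x) \<partial>J) < \<infinity>"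
    and npos: "1 \<le> n"
begin

abbreviation "PZ \<equiv> PiM {1..n} (\<lambda>_. J)"
abbreviation "P \<equiv> cp_paths n"
abbreviation "Pr \<equiv> cp_prior q J n"
abbreviation "pp c \<equiv> cp_path_prob q n c"

definition W :: "nat \<Rightarrow> ((nat \<Rightarrow> nat) \<times> (nat \<Rightarrow> 'x)) measure" where
  "W m = density Pr (\<lambda>\<omega>. ennreal (cp_lik p y m \<omega>))"

lemma PZ_prob: "prob_space PZ"
  using J by (intro prob_space_PiM) auto

lemma sets_Pr: "sets Pr = sets (count_space P \<Otimes>\<^sub>M PZ)"
  unfolding cp_prior_def by (intro sets_pair_measure_cong) auto

lemma space_Pr: "space Pr = P \<times> space PZ"
  using sets_eq_imp_space_eq[OF sets_Pr] by (simp add: space_pair_measure)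

lemma meas_Pr:
  assumes "\<And>c. c \<in> P \<Longrightarrow> (\<lambda>z. f (c, z)) \<in> measurable PZ K"
  shows "f \<in> measurable Pr K"
  unfolding measurable_cong_sets[OF sets_Pr refl]
  by (rule measurable_pair_measure_countable1[OF countable_finite[OF cp_paths_finite]]) (rule assms)

lemma mx_in: "c \<in> P \<Longrightarrow> k \<in> {1..n} \<Longrightarrow> mx (c k) \<in> {1..n}"
  using cp_paths_le[of c n k] by (auto simp: mx_def)

lemma cpX_eq: "cpX k \<omega> = snd \<omega> (mx (fst \<omega> k))"
  by (simp add: cpX_def mx_def)

lemma meas_cpX: assumes k: "k \<in> {1..n}" shows "cpX k \<in> measurable Pr J"
proof (rule meas_Pr)
  fix c assume c: "c \<in> P"
  have "mx (c k) \<in> {1..n}" using mx_in[OF c k] .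
  then show "(\<lambda>z. cpX k (c, z)) \<in> measurable PZ J" by (simp add: cpX_eq measurable_component_singleton)
qed

lemma meas_cpC: "cpC k \<in> measurable Pr (count_space UNIV)"
  by (rule meas_Pr) (simp add: cpC_def)

lemma pm_enn: "k \<in> {1..n} \<Longrightarrow> (\<lambda>x. ennreal (p (y k) x)) \<in> borel_measurable J"
  using pm by measurable

lemma meas_lik: "m \<le> n \<Longrightarrow> cp_lik p y m \<in> borel_measurable Pr"
  unfolding cp_lik_def
  by (intro borel_measurable_prod measurable_compose[OF meas_cpX pm]) auto

lemma lik_nonneg: "0 \<le> cp_lik p y m \<omega>"
  unfolding cp_lik_def using ppos by (intro prod_nonneg) (auto intro: less_imp_le)

lemma ennreal_lik: "ennreal (cp_lik p y m (c, z)) = (\<Prod>k\<in>{1..m}. ennreal (p (y k) (z (mx (c k)))))"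
  unfolding cp_lik_def cpX_eq using ppos by (subst prod_ennreal) (auto intro: less_imp_le)

lemma nn_Pr:
  assumes f: "f \<in> borel_measurable Pr"
  shows "(\<integral>\<^sup>+\<omega>. f \<omega> \<partial>Pr) = (\<Sum>c\<in>P. ennreal (pp c) * (\<integral>\<^sup>+z. f (c, z) \<partial>PZ))"
proof -
  interpret PZ: prob_space PZ by (rule PZ_prob)
  have f': "f \<in> borel_measurable (density (count_space P) (\<lambda>c. ennreal (pp c)) \<Otimes>\<^sub>M PZ)"
    using f unfolding cp_prior_def .
  have "(\<integral>\<^sup>+\<omega>. f \<omega> \<partial>Pr) = (\<integral>\<^sup>+ c. \<integral>\<^sup>+ z. f (c,z) \<partial>PZ \<partial>(density (count_space P) (\<lambda>c. ennreal (pp c))))"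
    unfolding cp_prior_def using PZ.nn_integral_fst[OF f'] by simp
  also have "\<dots> = (\<integral>\<^sup>+ c. ennreal (pp c) * (\<integral>\<^sup>+ z. f (c,z) \<partial>PZ) \<partial>count_space P)"
    by (rule nn_integral_density) simp_all
  also have "\<dots> = (\<Sum>c\<in>P. ennreal (pp c) * (\<integral>\<^sup>+z. f (c, z) \<partial>PZ))"
    by (rule nn_integral_count_space_finite[OF cp_paths_finite])
  finally show ?thesis .
qed

lemma prod_formula:
  assumes c: "c \<in> P" and K: "K \<subseteq> {1..n}" and a: "a \<in> {1..n}" and \<phi>: "\<phi> \<in> borel_measurable J"
  shows "(\<integral>\<^sup>+z. (\<Prod>k\<in>K. ennreal (p (y k) (z (mx (c k))))) * \<phi> (z (mx (c a))) \<partial>PZ)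
       = (\<Prod>s\<in>{1..n}. \<integral>\<^sup>+x. (\<Prod>k\<in>{k\<in>K. mx (c k) = s}. ennreal (p (y k) x)) * (if s = mx (c a) then \<phi> x else 1) \<partial>J)"
proof -
  interpret PS: product_sigma_finite "\<lambda>_::nat. J"
    by (simp add: product_sigma_finite_def J prob_space_imp_sigma_finite)
  define G where "G s x = (\<Prod>k\<in>{k\<in>K. mx (c k) = s}. ennreal (p (y k) x)) * (if s = mx (c a) then \<phi> x else 1)" for s x
  have finK: "finite K" using K finite_subset by blast
  have eq: "(\<Prod>k\<in>K. ennreal (p (y k) (z (mx (c k))))) * \<phi> (z (mx (c a))) = (\<Prod>s\<in>{1..n}. G s (z s))" for z
  proof -
    have "(\<Prod>k\<in>K. ennreal (p (y k) (z (mx (c k))))) = (\<Prod>s\<in>{1..n}. \<Prod>k\<in>{k\<in>K. mx (c k) = s}. ennreal (p (y k) (z (mx (c k)))))"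
      by (rule prod.group[symmetric]) (use K mx_in[OF c] finK in auto)
    also have "\<dots> = (\<Prod>s\<in>{1..n}. \<Prod>k\<in>{k\<in>K. mx (c k) = s}. ennreal (p (y k) (z s)))"
      by (intro prod.cong) auto
    finally have 1: "(\<Prod>k\<in>K. ennreal (p (y k) (z (mx (c k))))) = (\<Prod>s\<in>{1..n}. \<Prod>k\<in>{k\<in>K. mx (c k) = s}. ennreal (p (y k) (z s)))" .
    have 2: "\<phi> (z (mx (c a))) = (\<Prod>s\<in>{1..n}. if s = mx (c a) then \<phi> (z s) else 1)"
      using mx_in[OF c a] by (simp add: prod.delta')
    show ?thesis unfolding 1 2 G_def by (simp add: prod.distrib)
  qed
  have Gm: "G s \<in> borel_measurable J" for s
  proof -
    have "(\<lambda>x. \<Prod>k\<in>{k\<in>K. mx (c k) = s}. ennreal (p (y k) x)) \<in> borel_measurable J"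
      by (intro borel_measurable_prod_ennreal pm_enn) (use K in auto)
    then show ?thesis unfolding G_def using \<phi> by (cases "s = mx (c a)") auto
  qed
  have "(\<integral>\<^sup>+z. (\<Prod>k\<in>K. ennreal (p (y k) (z (mx (c k))))) * \<phi> (z (mx (c a))) \<partial>PZ)
      = (\<integral>\<^sup>+z. (\<Prod>s\<in>{1..n}. G s (z s)) \<partial>PZ)"
    by (simp only: eq)
  also have "\<dots> = (\<Prod>s\<in>{1..n}. integral\<^sup>N J (G s))"
    by (rule PS.product_nn_integral_prod) (auto intro: Gm)
  finally show ?thesis unfolding G_def .
qed


definition Af :: "nat \<Rightarrow> (nat \<Rightarrow> nat) \<Rightarrow> ('x \<Rightarrow> ennreal) \<Rightarrow> ennreal" where
  "Af i c \<phi> = (\<Prod>s\<in>{1..i}. \<integral>\<^sup>+x. (\<Prod>k\<in>{k\<in>{1..i}. mx (c k) = s}. ennreal (p (y k) x)) * (if s = mx (c i) then \<phi> x else 1) \<partial>J)"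

definition Bf :: "nat \<Rightarrow> (nat \<Rightarrow> nat) \<Rightarrow> ennreal" where
  "Bf i c = (\<Prod>s\<in>{Suc i..n}. \<integral>\<^sup>+x. (\<Prod>k\<in>{k\<in>{Suc i..n}. mx (c k) = s}. ennreal (p (y k) x)) \<partial>J)"

lemma Af_cong:
  assumes "\<And>k. k \<le> i \<Longrightarrow> c k = c' k"
  shows "Af i c \<phi> = Af i c' \<phi>"
proof -
  have S: "{k\<in>{1..i}. mx (c k) = s} = {k\<in>{1..i}. mx (c' k) = s}" for s using assms by auto
  have "c i = c' i" using assms by simp
  then show ?thesis unfolding Af_def S by simp
qed

lemma Bf_cong:
  assumes "\<And>k. Suc i \<le> k \<Longrightarrow> c k = c' k"
  shows "Bf i c = Bf i c'"
proof -
  have S: "{k\<in>{Suc i..n}. mx (c k) = s} = {k\<in>{Suc i..n}. mx (c' k) = s}" for s using assms by auto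
  then show ?thesis unfolding Bf_def S by simp
qed

lemma Af_zero:
  assumes "c \<in> P" "1 \<le> i"
  shows "Af i c (\<lambda>_. 0) = 0"
proof -
  have "mx (c i) \<in> {1..i}" using cp_paths_le[OF assms(1), of i] assms(2) by (auto simp: mx_def)
  then show ?thesis unfolding Af_def by (intro prod_zero) auto
qed

lemma one_int: "(\<integral>\<^sup>+x. 1 \<partial>J) = 1"
  using prob_space.emeasure_space_1[OF J] by simp

lemma mxle: "c \<in> P \<Longrightarrow> 1 \<le> k \<Longrightarrow> mx (c k) \<le> k"
  using cp_paths_le[of c n k] by (auto simp: mx_def)

lemma intA:
  assumes c: "c \<in> P" and i: "1 \<le> i" "i \<le> n" and \<phi>: "\<phi> \<in> borel_measurable J"
  shows "(\<integral>\<^sup>+z. (\<Prod>k\<in>{1..i}. ennreal (p (y k) (z (mx (c k))))) * \<phi> (z (mx (c i))) \<partial>PZ) = Af i c \<phi>"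
proof -
  define G where "G s = (\<integral>\<^sup>+x. (\<Prod>k\<in>{k\<in>{1..i}. mx (c k) = s}. ennreal (p (y k) x)) * (if s = mx (c i) then \<phi> x else 1) \<partial>J)" for s
  have "(\<integral>\<^sup>+z. (\<Prod>k\<in>{1..i}. ennreal (p (y k) (z (mx (c k))))) * \<phi> (z (mx (c i))) \<partial>PZ) = (\<Prod>s\<in>{1..n}. G s)"
    unfolding G_def by (rule prod_formula[OF c _ _ \<phi>]) (use i in auto)
  also have "(\<Prod>s\<in>{1..n}. G s) = (\<Prod>s\<in>{1..i}. G s) * (\<Prod>s\<in>{Suc i..n}. G s)"
  proof -
    have U: "{1..n} = {1..i} \<union> {Suc i..n}" using i by auto
    show ?thesis unfolding U by (rule prod.union_disjoint) auto
  qed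
  also have "(\<Prod>s\<in>{Suc i..n}. G s) = 1"
  proof (rule prod.neutral, rule ballI)
    fix s assume s: "s \<in> {Suc i..n}"
    have e: "{k\<in>{1..i}. mx (c k) = s} = {}" using mxle[OF c] s by fastforce
    have "s \<noteq> mx (c i)" using mxle[OF c, of i] i s by auto
    then show "G s = 1" unfolding G_def e using one_int by simp
  qed
  finally show ?thesis unfolding G_def Af_def by simp
qed

lemma intAB:
  assumes c: "c \<in> P" and v: "cvalid n c" and i: "1 \<le> i" "i < n" and ci: "c (Suc i) = Suc i"
    and \<phi>: "\<phi> \<in> borel_measurable J"
  shows "(\<integral>\<^sup>+z. (\<Prod>k\<in>{1..n}. ennreal (p (y k) (z (mx (c k))))) * \<phi> (z (mx (c i))) \<partial>PZ) = Af i c \<phi> * Bf i c"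
proof -
  define G where "G s = (\<integral>\<^sup>+x. (\<Prod>k\<in>{k\<in>{1..n}. mx (c k) = s}. ennreal (p (y k) x)) * (if s = mx (c i) then \<phi> x else 1) \<partial>J)" for s
  have cl: "\<forall>k. c k \<le> k" using cp_paths_le[OF c] by blast
  have "(\<integral>\<^sup>+z. (\<Prod>k\<in>{1..n}. ennreal (p (y k) (z (mx (c k))))) * \<phi> (z (mx (c i))) \<partial>PZ) = (\<Prod>s\<in>{1..n}. G s)"
    unfolding G_def by (rule prod_formula[OF c _ _ \<phi>]) (use i in auto)
  also have "(\<Prod>s\<in>{1..n}. G s) = (\<Prod>s\<in>{1..i}. G s) * (\<Prod>s\<in>{Suc i..n}. G s)"
  proof -
    have U: "{1..n} = {1..i} \<union> {Suc i..n}" using i by auto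
    show ?thesis unfolding U by (rule prod.union_disjoint) auto
  qed
  also have "(\<Prod>s\<in>{1..i}. G s) = Af i c \<phi>"
    unfolding Af_def
  proof (rule prod.cong[OF refl])
    fix s assume s: "s \<in> {1..i}"
    have "{k\<in>{1..n}. mx (c k) = s} = {k\<in>{1..i}. mx (c k) = s}"
    proof (intro set_eqI iffI)
      fix k assume k: "k \<in> {k\<in>{1..n}. mx (c k) = s}"
      show "k \<in> {k\<in>{1..i}. mx (c k) = s}"
      proof (rule ccontr)
        assume "k \<notin> {k\<in>{1..i}. mx (c k) = s}"
        then have "Suc i \<le> k" using k by auto
        then have "Suc i \<le> c k" using cvalid_after[OF v cl, of i k] ci k by auto
        then show False using k s by (auto simp: mx_def)
      qed
    qed (use i in auto)
    then show "G s = (\<integral>\<^sup>+x. (\<Prod>k\<in>{k\<in>{1..i}. mx (c k) = s}. ennreal (p (y k) x)) * (if s = mx (c i) then \<phi> x else 1) \<partial>J)"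
      unfolding G_def by simp
  qed
  also have "(\<Prod>s\<in>{Suc i..n}. G s) = Bf i c"
    unfolding Bf_def
  proof (rule prod.cong[OF refl])
    fix s assume s: "s \<in> {Suc i..n}"
    have "{k\<in>{1..n}. mx (c k) = s} = {k\<in>{Suc i..n}. mx (c k) = s}"
    proof (intro set_eqI iffI)
      fix k assume k: "k \<in> {k\<in>{1..n}. mx (c k) = s}"
      show "k \<in> {k\<in>{Suc i..n}. mx (c k) = s}"
      proof (rule ccontr)
        assume "k \<notin> {k\<in>{Suc i..n}. mx (c k) = s}"
        then have "k \<le> i" using k by auto
        then show False using mxle[OF c, of k] k s by auto
      qed
    qed (use i in auto)
    moreover have "s \<noteq> mx (c i)" using mxle[OF c, of i] i s by auto
    ultimately show "G s = (\<integral>\<^sup>+x. (\<Prod>k\<in>{k\<in>{Suc i..n}. mx (c k) = s}. ennreal (p (y k) x)) \<partial>J)"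
      unfolding G_def by simp
  qed
  finally show ?thesis .
qed

lemma event_sets: "cp_event q J n i j \<in> sets Pr"
proof -
  have "cp_event q J n i j = cpC i -` {j} \<inter> space Pr" by (auto simp: cp_event_def)
  then show ?thesis using measurable_sets[OF meas_cpC, of "{j}" i] by simp
qed

lemma ind_event: "c \<in> P \<Longrightarrow> z \<in> space PZ \<Longrightarrow> indicator (cp_event q J n i j) (c, z) = (if c i = j then 1 else 0)"
  by (auto simp: cp_event_def space_Pr cpC_def indicator_def)

lemma meas_GX:
  assumes i: "i \<in> {1..n}" and Gm: "\<And>t. G t \<in> borel_measurable J"
  shows "(\<lambda>\<omega>. G (cpC i \<omega>) (cpX i \<omega>)) \<in> borel_measurable Pr"
proof (rule meas_Pr)
  fix c assume c: "c \<in> P"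
  have "mx (c i) \<in> {1..n}" using mx_in[OF c i] .
  then have "(\<lambda>z. z (mx (c i))) \<in> measurable PZ J" by (rule measurable_component_singleton)
  then show "(\<lambda>z. G (cpC i (c, z)) (cpX i (c, z))) \<in> borel_measurable PZ"
    by (simp add: cpC_def cpX_eq measurable_compose[OF _ Gm])
qed

lemma sets_W: "sets (W m) = sets Pr" and space_W: "space (W m) = space Pr"
  by (simp_all add: W_def)

lemma nn_W:
  assumes m: "m \<le> n" and h: "h \<in> borel_measurable Pr"
  shows "(\<integral>\<^sup>+\<omega>. h \<omega> \<partial>W m) = (\<Sum>c\<in>P. ennreal (pp c) * \<integral>\<^sup>+z. (\<Prod>k\<in>{1..m}. ennreal (p (y k) (z (mx (c k))))) * h (c, z) \<partial>PZ)"
proof -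
  have lm: "(\<lambda>\<omega>. ennreal (cp_lik p y m \<omega>)) \<in> borel_measurable Pr" using meas_lik[OF m] by measurable
  have "(\<integral>\<^sup>+\<omega>. h \<omega> \<partial>W m) = (\<integral>\<^sup>+\<omega>. ennreal (cp_lik p y m \<omega>) * h \<omega> \<partial>Pr)"
    unfolding W_def by (rule nn_integral_density[OF lm h])
  also have "\<dots> = (\<Sum>c\<in>P. ennreal (pp c) * \<integral>\<^sup>+z. ennreal (cp_lik p y m (c, z)) * h (c, z) \<partial>PZ)"
    by (rule nn_Pr) (use lm h in measurable)
  finally show ?thesis by (simp only: ennreal_lik)
qed


lemma In_formula:
  assumes i: "1 \<le> i" "i < n" and Gm: "\<And>t. G t \<in> borel_measurable J"
  shows "(\<integral>\<^sup>+\<omega>. indicator (cp_event q J n (Suc i) (Suc i)) \<omega> * G (cpC i \<omega>) (cpX i \<omega>) \<partial>W n)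
       = (\<Sum>c\<in>{c\<in>P. c (Suc i) = Suc i}. ennreal (pp c) * Af i c (G (c i)) * Bf i c)"
proof -
  let ?E = "cp_event q J n (Suc i) (Suc i)"
  have hm: "(\<lambda>\<omega>. indicator ?E \<omega> * G (cpC i \<omega>) (cpX i \<omega>)) \<in> borel_measurable Pr"
  proof -
    have gx: "(\<lambda>\<omega>. G (cpC i \<omega>) (cpX i \<omega>)) \<in> borel_measurable Pr" by (rule meas_GX) (use i Gm in auto)
    show ?thesis using gx event_sets[of "Suc i" "Suc i"] by measurable
  qed
  have "(\<integral>\<^sup>+\<omega>. indicator ?E \<omega> * G (cpC i \<omega>) (cpX i \<omega>) \<partial>W n)
      = (\<Sum>c\<in>P. ennreal (pp c) * \<integral>\<^sup>+z. (\<Prod>k\<in>{1..n}. ennreal (p (y k) (z (mx (c k))))) * (indicator ?E (c, z) * G (cpC i (c, z)) (cpX i (c, z))) \<partial>PZ)"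
    by (rule nn_W[OF order_refl hm])
  also have "\<dots> = (\<Sum>c\<in>P. if c (Suc i) = Suc i then ennreal (pp c) * Af i c (G (c i)) * Bf i c else 0)"
  proof (rule sum.cong[OF refl])
    fix c assume c: "c \<in> P"
    show "ennreal (pp c) * \<integral>\<^sup>+z. (\<Prod>k\<in>{1..n}. ennreal (p (y k) (z (mx (c k))))) * (indicator ?E (c, z) * G (cpC i (c, z)) (cpX i (c, z))) \<partial>PZ
        = (if c (Suc i) = Suc i then ennreal (pp c) * Af i c (G (c i)) * Bf i c else 0)"
    proof (cases "c (Suc i) = Suc i")
      case True
      have "(\<integral>\<^sup>+z. (\<Prod>k\<in>{1..n}. ennreal (p (y k) (z (mx (c k))))) * (indicator ?E (c, z) * G (cpC i (c, z)) (cpX i (c, z))) \<partial>PZ)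
          = (\<integral>\<^sup>+z. (\<Prod>k\<in>{1..n}. ennreal (p (y k) (z (mx (c k))))) * G (c i) (z (mx (c i))) \<partial>PZ)"
        by (intro nn_integral_cong) (simp add: ind_event[OF c] True cpC_def cpX_eq)
      moreover have "ennreal (pp c) * (\<integral>\<^sup>+z. (\<Prod>k\<in>{1..n}. ennreal (p (y k) (z (mx (c k))))) * G (c i) (z (mx (c i))) \<partial>PZ)
          = ennreal (pp c) * Af i c (G (c i)) * Bf i c"
      proof (cases "pp c = 0")
        case False
        then have "cvalid n c" by (rule path_prob_valid)
        then show ?thesis using intAB[OF c _ i True Gm] by (simp add: mult.assoc)
      qed simp
      ultimately show ?thesis using True by simp
    next
      case False
      have "(\<integral>\<^sup>+z. (\<Prod>k\<in>{1..n}. ennreal (p (y k) (z (mx (c k))))) * (indicator ?E (c, z) * G (cpC i (c, z)) (cpX i (c, z))) \<partial>PZ)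
          = (\<integral>\<^sup>+z. 0 \<partial>PZ)"
        by (intro nn_integral_cong) (simp add: ind_event[OF c] False)
      then show ?thesis using False by simp
    qed
  qed
  also have "\<dots> = (\<Sum>c\<in>{c\<in>P. c (Suc i) = Suc i}. ennreal (pp c) * Af i c (G (c i)) * Bf i c)"
    by (rule sum.inter_filter[symmetric, OF cp_paths_finite])
  finally show ?thesis .
qed

lemma Ii_formula:
  assumes i: "1 \<le> i" "i < n" and Gm: "\<And>t. G t \<in> borel_measurable J"
  shows "(\<integral>\<^sup>+\<omega>. indicator (cp_event q J n (Suc i) (Suc i)) \<omega> * G (cpC i \<omega>) (cpX i \<omega>) \<partial>W i)
       = (\<Sum>c\<in>{c\<in>P. c (Suc i) = Suc i}. ennreal (pp c) * Af i c (G (c i)))"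
proof -
  let ?E = "cp_event q J n (Suc i) (Suc i)"
  have hm: "(\<lambda>\<omega>. indicator ?E \<omega> * G (cpC i \<omega>) (cpX i \<omega>)) \<in> borel_measurable Pr"
  proof -
    have gx: "(\<lambda>\<omega>. G (cpC i \<omega>) (cpX i \<omega>)) \<in> borel_measurable Pr" by (rule meas_GX) (use i Gm in auto)
    show ?thesis using gx event_sets[of "Suc i" "Suc i"] by measurable
  qed
  have "(\<integral>\<^sup>+\<omega>. indicator ?E \<omega> * G (cpC i \<omega>) (cpX i \<omega>) \<partial>W i)
      = (\<Sum>c\<in>P. ennreal (pp c) * \<integral>\<^sup>+z. (\<Prod>k\<in>{1..i}. ennreal (p (y k) (z (mx (c k))))) * (indicator ?E (c, z) * G (cpC i (c, z)) (cpX i (c, z))) \<partial>PZ)"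
    by (rule nn_W[OF _ hm]) (use i in simp)
  also have "\<dots> = (\<Sum>c\<in>P. if c (Suc i) = Suc i then ennreal (pp c) * Af i c (G (c i)) else 0)"
  proof (rule sum.cong[OF refl])
    fix c assume c: "c \<in> P"
    show "ennreal (pp c) * \<integral>\<^sup>+z. (\<Prod>k\<in>{1..i}. ennreal (p (y k) (z (mx (c k))))) * (indicator ?E (c, z) * G (cpC i (c, z)) (cpX i (c, z))) \<partial>PZ
        = (if c (Suc i) = Suc i then ennreal (pp c) * Af i c (G (c i)) else 0)"
    proof (cases "c (Suc i) = Suc i")
      case True
      have "(\<integral>\<^sup>+z. (\<Prod>k\<in>{1..i}. ennreal (p (y k) (z (mx (c k))))) * (indicator ?E (c, z) * G (cpC i (c, z)) (cpX i (c, z))) \<partial>PZ)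
          = (\<integral>\<^sup>+z. (\<Prod>k\<in>{1..i}. ennreal (p (y k) (z (mx (c k))))) * G (c i) (z (mx (c i))) \<partial>PZ)"
        by (intro nn_integral_cong) (simp add: ind_event[OF c] True cpC_def cpX_eq)
      also have "\<dots> = Af i c (G (c i))" using intA[OF c i(1) _ Gm] i by simp
      finally show ?thesis using True by simp
    next
      case False
      have "(\<integral>\<^sup>+z. (\<Prod>k\<in>{1..i}. ennreal (p (y k) (z (mx (c k))))) * (indicator ?E (c, z) * G (cpC i (c, z)) (cpX i (c, z))) \<partial>PZ)
          = (\<integral>\<^sup>+z. 0 \<partial>PZ)"
        by (intro nn_integral_cong) (simp add: ind_event[OF c] False)
      then show ?thesis using False by simp
    qed
  qed
  also have "\<dots> = (\<Sum>c\<in>{c\<in>P. c (Suc i) = Suc i}. ennreal (pp c) * Af i c (G (c i)))"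
    by (rule sum.inter_filter[symmetric, OF cp_paths_finite])
  finally show ?thesis .
qed

lemma Ji_formula:
  assumes i: "1 \<le> i" "i \<le> n" and Gm: "\<And>t. G t \<in> borel_measurable J"
  shows "(\<integral>\<^sup>+\<omega>. G (cpC i \<omega>) (cpX i \<omega>) \<partial>W i) = (\<Sum>c\<in>P. ennreal (pp c) * Af i c (G (c i)))"
proof -
  have hm: "(\<lambda>\<omega>. G (cpC i \<omega>) (cpX i \<omega>)) \<in> borel_measurable Pr"
    by (rule meas_GX) (use i Gm in auto)
  have "(\<integral>\<^sup>+\<omega>. G (cpC i \<omega>) (cpX i \<omega>) \<partial>W i)
      = (\<Sum>c\<in>P. ennreal (pp c) * \<integral>\<^sup>+z. (\<Prod>k\<in>{1..i}. ennreal (p (y k) (z (mx (c k))))) * G (cpC i (c, z)) (cpX i (c, z)) \<partial>PZ)"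
    by (rule nn_W[OF i(2) hm])
  also have "\<dots> = (\<Sum>c\<in>P. ennreal (pp c) * Af i c (G (c i)))"
  proof (rule sum.cong[OF refl])
    fix c assume c: "c \<in> P"
    have "(\<integral>\<^sup>+z. (\<Prod>k\<in>{1..i}. ennreal (p (y k) (z (mx (c k))))) * G (cpC i (c, z)) (cpX i (c, z)) \<partial>PZ)
        = Af i c (G (c i))"
      using intA[OF c i Gm] by (simp add: cpC_def cpX_eq)
    then show "ennreal (pp c) * \<integral>\<^sup>+z. (\<Prod>k\<in>{1..i}. ennreal (p (y k) (z (mx (c k))))) * G (cpC i (c, z)) (cpX i (c, z)) \<partial>PZ
        = ennreal (pp c) * Af i c (G (c i))" by simp
  qed
  finally show ?thesis .
qed

lemma swap_W:
  assumes i: "1 \<le> i" "i < n" and Gm: "\<And>t. G t \<in> borel_measurable J"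
  shows "(\<integral>\<^sup>+\<omega>. indicator (cp_event q J n (Suc i) (Suc i)) \<omega> * G (cpC i \<omega>) (cpX i \<omega>) \<partial>W n) * emeasure (W i) (cp_event q J n (Suc i) (Suc i))
       = (\<integral>\<^sup>+\<omega>. indicator (cp_event q J n (Suc i) (Suc i)) \<omega> * G (cpC i \<omega>) (cpX i \<omega>) \<partial>W i) * emeasure (W n) (cp_event q J n (Suc i) (Suc i))"
proof -
  let ?E = "cp_event q J n (Suc i) (Suc i)"
  have Es: "?E \<in> sets (W m)" for m unfolding sets_W by (rule event_sets)
  have one: "emeasure (W m) ?E = (\<integral>\<^sup>+\<omega>. indicator ?E \<omega> * (\<lambda>_ _. 1::ennreal) (cpC i \<omega>) (cpX i \<omega>) \<partial>W m)" for m
    using Es by simp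
  have a: "(\<integral>\<^sup>+\<omega>. indicator ?E \<omega> * G (cpC i \<omega>) (cpX i \<omega>) \<partial>W n) = (\<Sum>c\<in>{c\<in>P. c (Suc i) = Suc i}. ennreal (pp c) * Af i c (G (c i)) * Bf i c)"
    by (rule In_formula[OF i Gm])
  have b: "(\<integral>\<^sup>+\<omega>. indicator ?E \<omega> * G (cpC i \<omega>) (cpX i \<omega>) \<partial>W i) = (\<Sum>c\<in>{c\<in>P. c (Suc i) = Suc i}. ennreal (pp c) * Af i c (G (c i)))"
    by (rule Ii_formula[OF i Gm])
  have c: "emeasure (W n) ?E = (\<Sum>c\<in>{c\<in>P. c (Suc i) = Suc i}. ennreal (pp c) * Af i c (\<lambda>_. 1) * Bf i c)"
    unfolding one by (rule In_formula[OF i]) simp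
  have d: "emeasure (W i) ?E = (\<Sum>c\<in>{c\<in>P. c (Suc i) = Suc i}. ennreal (pp c) * Af i c (\<lambda>_. 1))"
    unfolding one by (rule Ii_formula[OF i]) simp
  show ?thesis
    unfolding a b c d
  proof (rule swap_sum[OF qr i(2)])
    show "\<forall>c c'. Af i (mg i c c') (G (mg i c c' i)) = Af i c (G (c i))"
      by (auto simp: mg_def intro!: Af_cong)
    show "\<forall>c c'. Af i (mg i c c') (\<lambda>_. 1) = Af i c (\<lambda>_. 1)"
      by (auto simp: mg_def intro!: Af_cong)
    show "\<forall>c c'. Bf i (mg i c c') = Bf i c'"
      by (auto simp: mg_def intro!: Bf_cong)
  qed
qed

lemma step_W:
  assumes i: "1 \<le> i" "i < n" and Hm: "H \<in> borel_measurable J"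
  shows "(\<integral>\<^sup>+\<omega>. indicator (cp_event q J n (Suc i) (Suc i)) \<omega> * (indicator (cp_event q J n i j) \<omega> * H (cpX i \<omega>)) \<partial>W i)
       = ennreal (1 - q j (Suc i)) * (\<integral>\<^sup>+\<omega>. indicator (cp_event q J n i j) \<omega> * H (cpX i \<omega>) \<partial>W i)"
proof -
  define G where "G t x = (if t = j then H x else 0)" for t x
  have Gm: "G t \<in> borel_measurable J" for t unfolding G_def using Hm by (cases "t = j") auto
  have e1: "indicator (cp_event q J n i j) \<omega> * H (cpX i \<omega>) = G (cpC i \<omega>) (cpX i \<omega>)" if "\<omega> \<in> space (W i)" for \<omega>
    using that by (auto simp: G_def cp_event_def space_W indicator_def)
  have "(\<integral>\<^sup>+\<omega>. indicator (cp_event q J n (Suc i) (Suc i)) \<omega> * (indicator (cp_event q J n i j) \<omega> * H (cpX i \<omega>)) \<partial>W i)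
      = (\<integral>\<^sup>+\<omega>. indicator (cp_event q J n (Suc i) (Suc i)) \<omega> * G (cpC i \<omega>) (cpX i \<omega>) \<partial>W i)"
    by (intro nn_integral_cong) (simp add: e1)
  also have "\<dots> = (\<Sum>c\<in>{c\<in>P. c (Suc i) = Suc i}. ennreal (pp c) * Af i c (G (c i)))"
    by (rule Ii_formula[OF i Gm])
  also have "\<dots> = (\<Sum>c\<in>P. ennreal (pp c) * (if c (Suc i) = Suc i then Af i c (G (c i)) else 0))"
    by (subst sum.inter_filter[OF cp_paths_finite]) (intro sum.cong, auto)
  also have "\<dots> = (\<Sum>c\<in>P. ennreal (pp c) * (ennreal (1 - q (c i) (Suc i)) * Af i c (G (c i))))"
    by (rule step_marg[OF qr _ i(2)]) (auto simp: rs_def intro!: Af_cong)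
  also have "\<dots> = (\<Sum>c\<in>P. ennreal (1 - q j (Suc i)) * (ennreal (pp c) * Af i c (G (c i))))"
  proof (rule sum.cong[OF refl])
    fix c assume c: "c \<in> P"
    show "ennreal (pp c) * (ennreal (1 - q (c i) (Suc i)) * Af i c (G (c i))) = ennreal (1 - q j (Suc i)) * (ennreal (pp c) * Af i c (G (c i)))"
    proof (cases "c i = j")
      case False
      then have "G (c i) = (\<lambda>_. 0)" by (auto simp: G_def)
      then show ?thesis using Af_zero[OF c i(1)] by simp
    qed (simp add: mult_ac)
  qed
  also have "\<dots> = ennreal (1 - q j (Suc i)) * (\<Sum>c\<in>P. ennreal (pp c) * Af i c (G (c i)))"
    by (simp add: sum_distrib_left)
  also have "(\<Sum>c\<in>P. ennreal (pp c) * Af i c (G (c i))) = (\<integral>\<^sup>+\<omega>. G (cpC i \<omega>) (cpX i \<omega>) \<partial>W i)"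
    by (rule Ji_formula[symmetric]) (use i Gm in auto)
  also have "\<dots> = (\<integral>\<^sup>+\<omega>. indicator (cp_event q J n i j) \<omega> * H (cpX i \<omega>) \<partial>W i)"
    by (intro nn_integral_cong) (simp add: e1)
  finally show ?thesis .
qed

lemma Wfin:
  assumes m: "m \<le> n"
  shows "emeasure (W m) (space (W m)) < \<infinity>"
proof -
  have "emeasure (W m) (space (W m)) = (\<integral>\<^sup>+\<omega>. 1 \<partial>W m)" by simp
  also have "\<dots> = (\<Sum>c\<in>P. ennreal (pp c) * \<integral>\<^sup>+z. (\<Prod>k\<in>{1..m}. ennreal (p (y k) (z (mx (c k))))) * 1 \<partial>PZ)"
    by (rule nn_W[OF m]) simp
  also have "\<dots> < top"
  proof (subst ennreal_sum_less_top[OF cp_paths_finite], rule ballI)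
    fix c assume c: "c \<in> P"
    show "ennreal (pp c) * (\<integral>\<^sup>+z. (\<Prod>k\<in>{1..m}. ennreal (p (y k) (z (mx (c k))))) * 1 \<partial>PZ) < top"
    proof (cases "pp c = 0")
      case False
      then have v: "cvalid n c" by (rule path_prob_valid)
      have cl: "\<forall>k. c k \<le> k" using cp_paths_le[OF c] by blast
      have "(\<integral>\<^sup>+z. (\<Prod>k\<in>{1..m}. ennreal (p (y k) (z (mx (c k))))) * (\<lambda>_. 1) (z (mx (c 1))) \<partial>PZ)
          = (\<Prod>s\<in>{1..n}. \<integral>\<^sup>+x. (\<Prod>k\<in>{k\<in>{1..m}. mx (c k) = s}. ennreal (p (y k) x)) * (if s = mx (c 1) then (\<lambda>_. 1) x else 1) \<partial>J)"
        by (rule prod_formula[OF c]) (use m npos in auto)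
      also have "\<dots> < top"
      proof -
        have fs: "(\<integral>\<^sup>+x. (\<Prod>k\<in>{k\<in>{1..m}. mx (c k) = s}. ennreal (p (y k) x)) * (if s = mx (c 1) then 1 else 1) \<partial>J) \<noteq> top" for s
        proof (cases "{k\<in>{1..m}. mx (c k) = s} = {}")
          case True
          have "(\<integral>\<^sup>+x. (\<Prod>k\<in>{k\<in>{1..m}. mx (c k) = s}. ennreal (p (y k) x)) * (if s = mx (c 1) then 1 else 1) \<partial>J) = 1"
            unfolding True using one_int by simp
          then show ?thesis by simp
        next
          case False
          then obtain e where e: "1 \<le> s" "s \<le> e" "e \<le> m" "{k\<in>{1..m}. mx (c k) = s} = {s..e}"
            using fiber_interval[OF v cl m] by blast
          have "(\<integral>\<^sup>+x. (\<Prod>k\<in>{k\<in>{1..m}. mx (c k) = s}. ennreal (p (y k) x)) * (if s = mx (c 1) then 1 else 1) \<partial>J)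
              = (\<integral>\<^sup>+x. ennreal (\<Prod>l=s..e. p (y l) x) \<partial>J)"
            unfolding e(4) using ppos by (subst prod_ennreal) (auto intro: less_imp_le)
          also have "\<dots> < \<infinity>" using segfin e m by auto
          finally show ?thesis by simp
        qed
        have "(\<Prod>s\<in>{1..n}. \<integral>\<^sup>+x. (\<Prod>k\<in>{k\<in>{1..m}. mx (c k) = s}. ennreal (p (y k) x)) * (if s = mx (c 1) then 1 else 1) \<partial>J) \<noteq> top"
          unfolding ennreal_prod_eq_top using fs by blast
        then show ?thesis by (simp add: less_top)
      qed
      finally show ?thesis by (simp add: ennreal_mult_less_top)
    qed simp
  qed
  finally show ?thesis by simp
qed

end

lemma cond_good:
  assumes B: "B \<in> sets M" and pos: "0 < emeasure M B" and fin: "emeasure M B < \<infinity>"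
  shows "cond_measure M B = density M (\<lambda>\<omega>. ennreal (indicator B \<omega> / measure M B))"
proof -
  have e: "emeasure M B = ennreal (measure M B)" using fin by (simp add: emeasure_eq_ennreal_measure)
  have mpos: "0 < measure M B" using pos e by (simp add: measure_nonneg)
  have "indicator B \<omega> / emeasure M B = ennreal (indicator B \<omega> / measure M B)" for \<omega>
  proof (cases "\<omega> \<in> B")
    case True
    then show ?thesis using mpos by (simp add: e divide_ennreal[symmetric])
  qed simp
  then show ?thesis unfolding cond_measure_def by simp
qed

lemma cond_null:
  assumes B: "B \<in> sets M" and bad: "emeasure M B = 0 \<or> emeasure M B = \<infinity>"
  shows "cond_measure M B = null_measure M"
proof (rule measure_eqI)
  show "sets (cond_measure M B) = sets (null_measure M)" by (simp add: cond_measure_def)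
  fix A assume "A \<in> sets (cond_measure M B)"
  then have A: "A \<in> sets M" by (simp add: cond_measure_def)
  show "emeasure (cond_measure M B) A = emeasure (null_measure M) A"
  proof (cases "emeasure M B = 0")
    case True
    have "emeasure (cond_measure M B) A = (\<integral>\<^sup>+\<omega>. (indicator B \<omega> / emeasure M B) * indicator A \<omega> \<partial>M)"
      unfolding cond_measure_def using A B by (subst emeasure_density) auto
    also have "\<dots> \<le> (\<integral>\<^sup>+\<omega>. top * indicator B \<omega> \<partial>M)"
      by (intro nn_integral_mono) (auto simp: True indicator_def)
    also have "\<dots> = 0" using True B by (simp add: nn_integral_cmult_indicator)
    finally show ?thesis by simp
  next
    case False
    then have inf: "emeasure M B = top" using bad by simp
    have "emeasure (cond_measure M B) A = (\<integral>\<^sup>+\<omega>. (indicator B \<omega> / emeasure M B) * indicator A \<omega> \<partial>M)"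
      unfolding cond_measure_def using A B by (subst emeasure_density) auto
    also have "\<dots> = 0" by (simp add: inf)
    finally show ?thesis by simp
  qed
qed

lemma GL:
  fixes g :: "'b \<Rightarrow> real"
  assumes M: "prob_space M" and F: "F \<in> sets M" and X: "X \<in> measurable M N" and g: "g \<in> borel_measurable N"
  shows "measure M F * (\<integral>x. g x \<partial>distr (cond_measure M F) N X) = (\<integral>\<omega>. indicator F \<omega> * g (X \<omega>) \<partial>M)"
proof (cases "emeasure M F = 0")
  case True
  then have m0: "measure M F = 0" by (simp add: measure_def)
  have "AE \<omega> in M. \<omega> \<notin> F" using True F by (intro AE_not_in null_setsI) auto
  then have "(\<integral>\<omega>. indicator F \<omega> * g (X \<omega>) \<partial>M) = (\<integral>\<omega>. 0 \<partial>M)"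
    by (intro integral_cong_AE) (use X g F in auto)
  then show ?thesis using m0 by simp
next
  case False
  interpret prob_space M by (rule M)
  have pos: "0 < emeasure M F" using False by (simp add: zero_less_iff_neq_zero)
  have fin: "emeasure M F < \<infinity>" by (simp add: less_top[symmetric])
  have mpos: "0 < measure M F" using pos fin by (simp add: emeasure_eq_measure)
  let ?D = "density M (\<lambda>\<omega>. ennreal (indicator F \<omega> / measure M F))"
  have X': "X \<in> measurable ?D N" using X measurable_cong_sets[of ?D M N N] by simp
  have "(\<integral>x. g x \<partial>distr (cond_measure M F) N X) = (\<integral>x. g x \<partial>distr ?D N X)"
    by (simp add: cond_good[OF F pos fin])
  also have "\<dots> = (\<integral>\<omega>. g (X \<omega>) \<partial>?D)" by (rule integral_distr[OF X' g])
  also have "\<dots> = (\<integral>\<omega>. (indicator F \<omega> / measure M F) *\<^sub>R g (X \<omega>) \<partial>M)"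
    by (rule integral_density) (use X g F in auto)
  also have "\<dots> = (\<integral>\<omega>. (1 / measure M F) * (indicator F \<omega> * g (X \<omega>)) \<partial>M)"
    by (intro Bochner_Integration.integral_cong) auto
  also have "\<dots> = (1 / measure M F) * (\<integral>\<omega>. indicator F \<omega> * g (X \<omega>) \<partial>M)"
    by (rule integral_mult_right_zero)
  finally show ?thesis using mpos by simp
qed

lemma CT:
  assumes M: "prob_space M" and E: "E \<in> sets M" and F: "F \<in> sets M" and pos: "0 < measure M E"
  shows "measure (cond_measure M E) F = measure M (F \<inter> E) / measure M E"
proof -
  interpret prob_space M by (rule M)
  have pos': "0 < emeasure M E" using pos by (simp add: emeasure_eq_measure)
  have fin: "emeasure M E < \<infinity>" by (simp add: less_top[symmetric])
  have "emeasure (cond_measure M E) F = (\<integral>\<^sup>+\<omega>. ennreal (indicator E \<omega> / measure M E) * indicator F \<omega> \<partial>M)"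
    unfolding cond_good[OF E pos' fin] using F E by (subst emeasure_density) auto
  also have "\<dots> = (\<integral>\<^sup>+\<omega>. ennreal (1 / measure M E) * indicator (F \<inter> E) \<omega> \<partial>M)"
    by (intro nn_integral_cong) (auto simp: indicator_def)
  also have "\<dots> = ennreal (1 / measure M E) * emeasure M (F \<inter> E)"
    using E F by (intro nn_integral_cmult_indicator) auto
  also have "\<dots> = ennreal (1 / measure M E * measure M (F \<inter> E))"
    using pos by (simp add: emeasure_eq_measure ennreal_mult[symmetric])
  finally have "emeasure (cond_measure M E) F = ennreal (measure M (F \<inter> E) / measure M E)" by simp
  then show ?thesis unfolding measure_def using pos by (simp add: enn2real_ennreal)
qed

lemma scale_transfer:
  fixes g :: "'b \<Rightarrow> real"
  assumes sets: "sets M1 = sets M2" and X: "X \<in> measurable M1 N"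
    and D1: "D1 \<in> borel_measurable M1" and D2: "D2 \<in> borel_measurable M1"
    and nn1: "\<And>\<omega>. 0 \<le> D1 \<omega>" and nn2: "\<And>\<omega>. 0 \<le> D2 \<omega>" and k: "0 \<le> k"
    and H: "\<And>H. H \<in> borel_measurable N \<Longrightarrow>
      (\<integral>\<^sup>+\<omega>. ennreal (D1 \<omega>) * H (X \<omega>) \<partial>M1) = ennreal k * (\<integral>\<^sup>+\<omega>. ennreal (D2 \<omega>) * H (X \<omega>) \<partial>M2)"
    and g: "g \<in> borel_measurable N"
  shows "(\<integral>\<omega>. D1 \<omega> * g (X \<omega>) \<partial>M1) = k * (\<integral>\<omega>. D2 \<omega> * g (X \<omega>) \<partial>M2)"
proof -
  have X2: "X \<in> measurable M2 N" using X sets measurable_cong_sets[of M1 M2 N N] by simp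
  have D2': "D2 \<in> borel_measurable M2" using D2 sets measurable_cong_sets[of M1 M2 borel borel] by simp
  let ?N1 = "distr (density M1 (\<lambda>\<omega>. ennreal (D1 \<omega>))) N X"
  let ?N2 = "distr (density M2 (\<lambda>\<omega>. ennreal (D2 \<omega>))) N X"
  have X1d: "X \<in> measurable (density M1 (\<lambda>\<omega>. ennreal (D1 \<omega>))) N"
    using X measurable_cong_sets[of "density M1 (\<lambda>\<omega>. ennreal (D1 \<omega>))" M1 N N] by simp
  have X2d: "X \<in> measurable (density M2 (\<lambda>\<omega>. ennreal (D2 \<omega>))) N"
    using X2 measurable_cong_sets[of "density M2 (\<lambda>\<omega>. ennreal (D2 \<omega>))" M2 N N] by simp
  have eq: "?N1 = density ?N2 (\<lambda>_. ennreal k)"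
  proof (rule measure_eqI)
    show "sets ?N1 = sets (density ?N2 (\<lambda>_. ennreal k))" by simp
    fix A assume "A \<in> sets ?N1"
    then have A: "A \<in> sets N" by simp
    have "emeasure ?N1 A = (\<integral>\<^sup>+x. indicator A x \<partial>?N1)" using A by simp
    also have "\<dots> = (\<integral>\<^sup>+\<omega>. indicator A (X \<omega>) \<partial>density M1 (\<lambda>\<omega>. ennreal (D1 \<omega>)))"
      by (rule nn_integral_distr[OF X1d]) (use A in simp)
    also have "\<dots> = (\<integral>\<^sup>+\<omega>. ennreal (D1 \<omega>) * indicator A (X \<omega>) \<partial>M1)"
      by (rule nn_integral_density) (use D1 X A in auto)
    also have "\<dots> = ennreal k * (\<integral>\<^sup>+\<omega>. ennreal (D2 \<omega>) * indicator A (X \<omega>) \<partial>M2)"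
      by (rule H) (use A in simp)
    also have "(\<integral>\<^sup>+\<omega>. ennreal (D2 \<omega>) * indicator A (X \<omega>) \<partial>M2) = (\<integral>\<^sup>+\<omega>. indicator A (X \<omega>) \<partial>density M2 (\<lambda>\<omega>. ennreal (D2 \<omega>)))"
      by (rule nn_integral_density[symmetric]) (use D2' X2 A in auto)
    also have "\<dots> = (\<integral>\<^sup>+x. indicator A x \<partial>?N2)"
      by (rule nn_integral_distr[symmetric, OF X2d]) (use A in simp)
    also have "ennreal k * \<dots> = (\<integral>\<^sup>+x. ennreal k * indicator A x \<partial>?N2)"
      by (rule nn_integral_cmult[symmetric]) (use A in simp)
    also have "\<dots> = emeasure (density ?N2 (\<lambda>_. ennreal k)) A"
      by (rule emeasure_density[symmetric]) (use A in auto)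
    finally show "emeasure ?N1 A = emeasure (density ?N2 (\<lambda>_. ennreal k)) A" .
  qed
  have "(\<integral>\<omega>. D1 \<omega> * g (X \<omega>) \<partial>M1) = (\<integral>\<omega>. g (X \<omega>) \<partial>density M1 (\<lambda>\<omega>. ennreal (D1 \<omega>)))"
    by (subst integral_density) (use D1 X g nn1 in auto)
  also have "\<dots> = (\<integral>x. g x \<partial>?N1)" by (rule integral_distr[symmetric, OF X1d g])
  also have "\<dots> = (\<integral>x. k * g x \<partial>?N2)" unfolding eq by (subst integral_density) (use g k in auto)
  also have "\<dots> = k * (\<integral>x. g x \<partial>?N2)" by simp
  also have "(\<integral>x. g x \<partial>?N2) = (\<integral>\<omega>. g (X \<omega>) \<partial>density M2 (\<lambda>\<omega>. ennreal (D2 \<omega>)))"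
    by (rule integral_distr[OF X2d g])
  also have "\<dots> = (\<integral>\<omega>. D2 \<omega> * g (X \<omega>) \<partial>M2)"
    by (subst integral_density) (use D2' X2 g nn2 in auto)
  finally show ?thesis .
qed

context cpm
begin

abbreviation "post m \<equiv> cp_post q J p y n m"

lemma post_eq: "post m = cond_measure (W m) (space (W m))"
  unfolding cp_post_def W_def Let_def ..

lemma sets_post: "sets (post m) = sets Pr"
  unfolding post_eq by (simp add: cond_measure_def sets_W)

lemma space_post: "space (post m) = space Pr"
  using sets_eq_imp_space_eq[OF sets_post] by simp

lemma meas_post: "f \<in> measurable Pr K \<Longrightarrow> f \<in> measurable (post m) K"
  by (simp only: measurable_cong_sets[OF sets_post refl, of m K])

lemma Z_facts:
  assumes m: "m \<le> n" and pos: "0 < emeasure (W m) (space (W m))"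
  shows "emeasure (W m) (space (W m)) = ennreal (measure (W m) (space (W m)))"
    and "0 < measure (W m) (space (W m))"
proof -
  have fin: "emeasure (W m) (space (W m)) < \<infinity>" by (rule Wfin[OF m])
  show e: "emeasure (W m) (space (W m)) = ennreal (measure (W m) (space (W m)))"
    using fin by (simp add: emeasure_eq_ennreal_measure)
  show "0 < measure (W m) (space (W m))" using pos e by (simp add: measure_nonneg)
qed

lemma post_good:
  assumes m: "m \<le> n" and pos: "0 < emeasure (W m) (space (W m))"
  shows "post m = density (W m) (\<lambda>\<omega>. ennreal (1 / measure (W m) (space (W m))))"
proof -
  have fin: "emeasure (W m) (space (W m)) < \<infinity>" by (rule Wfin[OF m])
  have "post m = density (W m) (\<lambda>\<omega>. ennreal (indicator (space (W m)) \<omega> / measure (W m) (space (W m))))"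
    unfolding post_eq by (rule cond_good[OF _ pos fin]) simp
  also have "\<dots> = density (W m) (\<lambda>\<omega>. ennreal (1 / measure (W m) (space (W m))))"
    by (intro density_cong) (auto simp: indicator_def)
  finally show ?thesis .
qed

lemma post_nn:
  assumes m: "m \<le> n" and pos: "0 < emeasure (W m) (space (W m))" and h: "h \<in> borel_measurable Pr"
  shows "(\<integral>\<^sup>+\<omega>. h \<omega> \<partial>post m) = ennreal (1 / measure (W m) (space (W m))) * (\<integral>\<^sup>+\<omega>. h \<omega> \<partial>W m)"
proof -
  have h': "h \<in> borel_measurable (W m)" using h by (simp only: measurable_cong_sets[OF sets_W refl, of m borel])
  show ?thesis unfolding post_good[OF m pos]
    by (subst nn_integral_density) (auto simp: h' nn_integral_cmult)
qed

lemma post_em: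
  assumes m: "m \<le> n" and pos: "0 < emeasure (W m) (space (W m))" and A: "A \<in> sets Pr"
  shows "emeasure (post m) A = ennreal (1 / measure (W m) (space (W m))) * emeasure (W m) A"
proof -
  have A': "A \<in> sets (post m)" "A \<in> sets (W m)" using A by (simp_all add: sets_post sets_W)
  have "emeasure (post m) A = (\<integral>\<^sup>+\<omega>. indicator A \<omega> \<partial>post m)" using A' by simp
  also have "\<dots> = ennreal (1 / measure (W m) (space (W m))) * (\<integral>\<^sup>+\<omega>. indicator A \<omega> \<partial>W m)"
    by (rule post_nn[OF m pos]) (use A in simp)
  finally show ?thesis using A' by simp
qed

lemma post_prob:
  assumes m: "m \<le> n" and pos: "0 < emeasure (W m) (space (W m))"
  shows "prob_space (post m)"
proof (rule prob_spaceI)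
  have sp: "space Pr \<in> sets Pr" by simp
  have "emeasure (post m) (space (post m)) = ennreal (1 / measure (W m) (space (W m))) * emeasure (W m) (space (W m))"
    unfolding space_post using post_em[OF m pos sp] space_W by simp
  also have "\<dots> = ennreal (1 / measure (W m) (space (W m))) * ennreal (measure (W m) (space (W m)))"
    using Z_facts[OF m pos] by simp
  also have "\<dots> = 1" using Z_facts(2)[OF m pos] by (simp add: ennreal_mult[symmetric])
  finally show "emeasure (post m) (space (post m)) = 1" .
qed

lemma W_pos_transfer:
  assumes i: "1 \<le> i" "i < n" and z: "emeasure (W i) (cp_event q J n (Suc i) (Suc i)) = 0"
  shows "emeasure (W n) (cp_event q J n (Suc i) (Suc i)) = 0"
proof -
  let ?E = "cp_event q J n (Suc i) (Suc i)"
  have Es: "?E \<in> sets (W m)" for m unfolding sets_W by (rule event_sets)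
  have one: "emeasure (W m) ?E = (\<integral>\<^sup>+\<omega>. indicator ?E \<omega> * (\<lambda>_ _. 1::ennreal) (cpC i \<omega>) (cpX i \<omega>) \<partial>W m)" for m
    using Es by simp
  have c: "emeasure (W n) ?E = (\<Sum>c\<in>{c\<in>P. c (Suc i) = Suc i}. ennreal (pp c) * Af i c (\<lambda>_. 1) * Bf i c)"
    unfolding one by (rule In_formula[OF i]) simp
  have d: "emeasure (W i) ?E = (\<Sum>c\<in>{c\<in>P. c (Suc i) = Suc i}. ennreal (pp c) * Af i c (\<lambda>_. 1))"
    unfolding one by (rule Ii_formula[OF i]) simp
  have fin: "finite {c\<in>P. c (Suc i) = Suc i}" using cp_paths_finite by simp
  have "\<forall>c\<in>{c\<in>P. c (Suc i) = Suc i}. ennreal (pp c) * Af i c (\<lambda>_. 1) = 0"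
    using z unfolding d using fin by simp
  then show ?thesis unfolding c using fin by simp
qed

lemma key_lt:
  fixes g :: "'x \<Rightarrow> real"
  assumes i: "1 \<le> i" "i < n" and j: "j \<le> i" and g: "g \<in> borel_measurable J"
    and goodn: "0 < emeasure (W n) (space (W n))"
  shows "cp_ctil q J p y n j i * cp_qtil q J p y n (i + 1) * (\<integral>x. g x \<partial>cp_H q J p y n j i)
       = (\<integral>\<omega>. indicator (cp_event q J n i j \<inter> cp_event q J n (Suc i) (Suc i)) \<omega> * g (cpX i \<omega>) \<partial>post n)"
proof -
  let ?E = "cp_event q J n (Suc i) (Suc i)" and ?F = "cp_event q J n i j"
  have Es: "?E \<in> sets Pr" "?F \<in> sets Pr" by (rule event_sets)+
  have Xi: "cpX i \<in> measurable Pr J" using i by (intro meas_cpX) auto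
  interpret Pn: prob_space "post n" by (rule post_prob[OF order_refl goodn])
  have ctil: "cp_ctil q J p y n j i = measure (cond_measure (post i) ?E) ?F" unfolding cp_ctil_def using i by simp
  have qtil: "cp_qtil q J p y n (i + 1) = measure (post n) ?E" unfolding cp_qtil_def by simp
  have H: "cp_H q J p y n j i = distr (cond_measure (post i) ?F) J (cpX i)" unfolding cp_H_def ..
  show ?thesis
  proof (cases "emeasure (post n) ?E = 0")
    case True
    then have m0: "measure (post n) ?E = 0" by (simp add: measure_def)
    have "AE \<omega> in post n. \<omega> \<notin> ?E" using True Es by (intro AE_not_in null_setsI) (auto simp: sets_post)
    then have "(\<integral>\<omega>. indicator (?F \<inter> ?E) \<omega> * g (cpX i \<omega>) \<partial>post n) = (\<integral>\<omega>. 0 \<partial>post n)"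
      by (intro integral_cong_AE) (use Es Xi g in \<open>auto intro!: meas_post\<close>)
    then show ?thesis unfolding qtil m0 by simp
  next
    case False
    have zn: "0 < measure (W n) (space (W n))" by (rule Z_facts(2)[OF order_refl goodn])
    have WnE: "emeasure (W n) ?E \<noteq> 0" using False post_em[OF order_refl goodn Es(1)] by auto
    have WiE: "emeasure (W i) ?E \<noteq> 0" using W_pos_transfer[OF i] WnE by blast
    have goodi: "0 < emeasure (W i) (space (W i))"
    proof -
      have "emeasure (W i) ?E \<le> emeasure (W i) (space (W i))" by (rule emeasure_space)
      then show ?thesis using WiE by (simp add: zero_less_iff_neq_zero) (metis le_zero_eq)
    qed
    have ii: "i \<le> n" using i by simp
    have zi: "0 < measure (W i) (space (W i))" by (rule Z_facts(2)[OF ii goodi])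
    interpret Pi: prob_space "post i" by (rule post_prob[OF ii goodi])
    have PiE: "0 < measure (post i) ?E"
    proof -
      have "emeasure (post i) ?E \<noteq> 0" using post_em[OF ii goodi Es(1)] WiE zi by simp
      then have "measure (post i) ?E \<noteq> 0" by (simp add: Pi.emeasure_eq_measure)
      then show ?thesis using measure_nonneg[of "post i" ?E] by linarith
    qed
    have PnE: "0 < measure (post n) ?E"
    proof -
      have "measure (post n) ?E \<noteq> 0" using False by (simp add: Pn.emeasure_eq_measure)
      then show ?thesis using measure_nonneg[of "post n" ?E] by linarith
    qed
    have Xp: "cpX i \<in> measurable (post m) J" for m by (rule meas_post[OF Xi])
    have qn: "0 \<le> 1 - q j (Suc i)" using qr j i by auto
    have indFE: "(\<lambda>\<omega>. indicator (?F \<inter> ?E) \<omega> :: real) \<in> borel_measurable (post m)" for m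
      using Es by (intro borel_measurable_indicator) (auto simp: sets_post)
    have indF: "(\<lambda>\<omega>. indicator ?F \<omega> :: real) \<in> borel_measurable (post m)" for m
      using Es by (intro borel_measurable_indicator) (auto simp: sets_post)
    have a_nn: "(\<integral>\<^sup>+\<omega>. ennreal (indicator (?F \<inter> ?E) \<omega>) * Hf (cpX i \<omega>) \<partial>post i)
        = ennreal (1 - q j (Suc i)) * (\<integral>\<^sup>+\<omega>. ennreal (indicator ?F \<omega>) * Hf (cpX i \<omega>) \<partial>post i)"
      if Hf: "Hf \<in> borel_measurable J" for Hf
    proof -
      have m1: "(\<lambda>\<omega>. ennreal (indicator (?F \<inter> ?E) \<omega>) * Hf (cpX i \<omega>)) \<in> borel_measurable Pr"
        using Es Xi Hf by measurable
      have m2: "(\<lambda>\<omega>. ennreal (indicator ?F \<omega>) * Hf (cpX i \<omega>)) \<in> borel_measurable Pr"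
        using Es Xi Hf by measurable
      have "(\<integral>\<^sup>+\<omega>. ennreal (indicator (?F \<inter> ?E) \<omega>) * Hf (cpX i \<omega>) \<partial>W i)
          = (\<integral>\<^sup>+\<omega>. indicator ?E \<omega> * (indicator ?F \<omega> * Hf (cpX i \<omega>)) \<partial>W i)"
        by (intro nn_integral_cong) (auto simp: indicator_def)
      also have "\<dots> = ennreal (1 - q j (Suc i)) * (\<integral>\<^sup>+\<omega>. indicator ?F \<omega> * Hf (cpX i \<omega>) \<partial>W i)"
        by (rule step_W[OF i Hf])
      also have "(\<integral>\<^sup>+\<omega>. indicator ?F \<omega> * Hf (cpX i \<omega>) \<partial>W i) = (\<integral>\<^sup>+\<omega>. ennreal (indicator ?F \<omega>) * Hf (cpX i \<omega>) \<partial>W i)"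
        by (intro nn_integral_cong) (auto simp: indicator_def)
      finally have e: "(\<integral>\<^sup>+\<omega>. ennreal (indicator (?F \<inter> ?E) \<omega>) * Hf (cpX i \<omega>) \<partial>W i)
          = ennreal (1 - q j (Suc i)) * (\<integral>\<^sup>+\<omega>. ennreal (indicator ?F \<omega>) * Hf (cpX i \<omega>) \<partial>W i)" .
      show ?thesis unfolding post_nn[OF ii goodi m1] post_nn[OF ii goodi m2] e by (simp add: mult_ac)
    qed
    have aint: "(\<integral>\<omega>. indicator (?F \<inter> ?E) \<omega> * gg (cpX i \<omega>) \<partial>post i) = (1 - q j (Suc i)) * (\<integral>\<omega>. indicator ?F \<omega> * gg (cpX i \<omega>) \<partial>post i)"
      if gg: "gg \<in> borel_measurable J" for gg :: "'x \<Rightarrow> real"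
      by (rule scale_transfer[OF refl Xp indFE indF _ _ qn a_nn gg]) auto
    have ameas: "measure (post i) (?F \<inter> ?E) = (1 - q j (Suc i)) * measure (post i) ?F"
      using aint[of "\<lambda>_. 1"] Es by (simp add: space_post Int_absorb2 sets.sets_into_space)
    have b_nn: "(\<integral>\<^sup>+\<omega>. ennreal (indicator (?F \<inter> ?E) \<omega>) * Hf (cpX i \<omega>) \<partial>post n)
        = ennreal (measure (post n) ?E / measure (post i) ?E) * (\<integral>\<^sup>+\<omega>. ennreal (indicator (?F \<inter> ?E) \<omega>) * Hf (cpX i \<omega>) \<partial>post i)"
      if Hf: "Hf \<in> borel_measurable J" for Hf
    proof -
      define G where "G t x = (if t = j then Hf x else 0)" for t x
      have Gm: "G t \<in> borel_measurable J" for t unfolding G_def using Hf by (cases "t = j") auto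
      have m1: "(\<lambda>\<omega>. ennreal (indicator (?F \<inter> ?E) \<omega>) * Hf (cpX i \<omega>)) \<in> borel_measurable Pr"
        using Es Xi Hf by measurable
      have eqG: "(\<integral>\<^sup>+\<omega>. ennreal (indicator (?F \<inter> ?E) \<omega>) * Hf (cpX i \<omega>) \<partial>W m)
          = (\<integral>\<^sup>+\<omega>. indicator ?E \<omega> * G (cpC i \<omega>) (cpX i \<omega>) \<partial>W m)" for m
        by (intro nn_integral_cong) (auto simp: indicator_def G_def cp_event_def space_W)
      define a where "a = (\<integral>\<^sup>+\<omega>. ennreal (indicator (?F \<inter> ?E) \<omega>) * Hf (cpX i \<omega>) \<partial>post n)"
      define b where "b = (\<integral>\<^sup>+\<omega>. ennreal (indicator (?F \<inter> ?E) \<omega>) * Hf (cpX i \<omega>) \<partial>post i)"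
      have sw: "a * emeasure (post i) ?E = b * emeasure (post n) ?E"
      proof -
        have "a * emeasure (post i) ?E = ennreal (1 / measure (W n) (space (W n))) * ennreal (1 / measure (W i) (space (W i)))
            * ((\<integral>\<^sup>+\<omega>. indicator ?E \<omega> * G (cpC i \<omega>) (cpX i \<omega>) \<partial>W n) * emeasure (W i) ?E)"
          unfolding a_def post_nn[OF order_refl goodn m1] post_em[OF ii goodi Es(1)] eqG by (simp add: mult_ac)
        also have "\<dots> = ennreal (1 / measure (W n) (space (W n))) * ennreal (1 / measure (W i) (space (W i)))
            * ((\<integral>\<^sup>+\<omega>. indicator ?E \<omega> * G (cpC i \<omega>) (cpX i \<omega>) \<partial>W i) * emeasure (W n) ?E)"
          by (simp only: swap_W[where G=G, OF i Gm])
        also have "\<dots> = b * emeasure (post n) ?E"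
          unfolding b_def post_nn[OF ii goodi m1] post_em[OF order_refl goodn Es(1)] eqG by (simp add: mult_ac)
        finally show ?thesis .
      qed
      have ei: "emeasure (post i) ?E = ennreal (measure (post i) ?E)" by (simp add: Pi.emeasure_eq_measure)
      have en: "emeasure (post n) ?E = ennreal (measure (post n) ?E)" by (simp add: Pn.emeasure_eq_measure)
      have "a = a * (ennreal (measure (post i) ?E) * ennreal (1 / measure (post i) ?E))"
        using PiE by (simp add: ennreal_mult[symmetric])
      also have "\<dots> = b * ennreal (measure (post n) ?E) * ennreal (1 / measure (post i) ?E)"
        using sw unfolding ei en by (simp add: mult.assoc[symmetric])
      also have "\<dots> = ennreal (measure (post n) ?E / measure (post i) ?E) * b"
        using PiE by (simp add: ennreal_mult[symmetric] mult_ac)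
      finally show ?thesis unfolding a_def b_def .
    qed
    have bint: "(\<integral>\<omega>. indicator (?F \<inter> ?E) \<omega> * g (cpX i \<omega>) \<partial>post n)
        = (measure (post n) ?E / measure (post i) ?E) * (\<integral>\<omega>. indicator (?F \<inter> ?E) \<omega> * g (cpX i \<omega>) \<partial>post i)"
      by (rule scale_transfer[OF _ Xp indFE indFE[of n] _ _ _ b_nn g]) (use PiE PnE in \<open>auto simp: sets_post\<close>)
    have ct: "measure (cond_measure (post i) ?E) ?F = measure (post i) (?F \<inter> ?E) / measure (post i) ?E"
      by (rule CT[OF Pi.prob_space_axioms _ _ PiE]) (use Es in \<open>auto simp: sets_post\<close>)
    have gl: "measure (post i) ?F * (\<integral>x. g x \<partial>cp_H q J p y n j i) = (\<integral>\<omega>. indicator ?F \<omega> * g (cpX i \<omega>) \<partial>post i)"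
      unfolding H by (rule GL[OF Pi.prob_space_axioms _ Xp g]) (use Es in \<open>auto simp: sets_post\<close>)
    have "cp_ctil q J p y n j i * cp_qtil q J p y n (i + 1) * (\<integral>x. g x \<partial>cp_H q J p y n j i)
        = (1 - q j (Suc i)) * measure (post i) ?F / measure (post i) ?E * measure (post n) ?E * (\<integral>x. g x \<partial>cp_H q J p y n j i)"
      unfolding ctil qtil ct ameas ..
    also have "\<dots> = (measure (post n) ?E / measure (post i) ?E) * ((1 - q j (Suc i)) * (measure (post i) ?F * (\<integral>x. g x \<partial>cp_H q J p y n j i)))"
      by (simp add: field_simps)
    also have "\<dots> = (measure (post n) ?E / measure (post i) ?E) * (\<integral>\<omega>. indicator (?F \<inter> ?E) \<omega> * g (cpX i \<omega>) \<partial>post i)"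
      unfolding gl aint[OF g] ..
    also have "\<dots> = (\<integral>\<omega>. indicator (?F \<inter> ?E) \<omega> * g (cpX i \<omega>) \<partial>post n)"
      unfolding bint ..
    finally show ?thesis .
  qed
qed

lemma key_eq:
  fixes g :: "'x \<Rightarrow> real"
  assumes g: "g \<in> borel_measurable J" and goodn: "0 < emeasure (W n) (space (W n))"
  shows "cp_ctil q J p y n j n * (\<integral>x. g x \<partial>cp_H q J p y n j n)
       = (\<integral>\<omega>. indicator (cp_event q J n n j) \<omega> * g (cpX n \<omega>) \<partial>post n)"
proof -
  interpret Pn: prob_space "post n" by (rule post_prob[OF order_refl goodn])
  have Xn: "cpX n \<in> measurable (post n) J" using npos by (intro meas_post meas_cpX) auto
  show ?thesis unfolding cp_ctil_def cp_H_def
    by (simp, rule GL[OF Pn.prob_space_axioms _ Xn g]) (simp add: sets_post event_sets)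
qed

end

lemma seg_same:
  assumes v: "cvalid n c" and cl: "\<forall>k. c k \<le> k" and i: "i \<le> n" and k: "mx (c i) \<le> k" "k \<le> i"
  shows "mx (c k) = mx (c i)"
proof (cases "c i = 0")
  case True
  have "c k \<le> c i" using cvalid_mono[OF v cl k(2) i] .
  then show ?thesis using True by simp
next
  case False
  then have s1: "1 \<le> c i" by simp
  have cs: "c (c i) = c i" using cvalid_start[OF v cl i refl s1] .
  have ck: "c i \<le> k" using k(1) s1 by (simp add: mx_def)
  have "c (c i) \<le> c k" using cvalid_mono[OF v cl ck] k i by simp
  moreover have "c k \<le> c i" using cvalid_mono[OF v cl k(2) i] .
  ultimately show ?thesis using cs by simp
qed

lemma partition_sum:
  fixes a :: "nat \<Rightarrow> real"
  assumes v: "cvalid n c" and cl: "\<forall>k. c k \<le> k"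
  shows "1 \<le> m \<Longrightarrow> m \<le> n \<Longrightarrow>
    (\<Sum>i=1..m-1. if c (Suc i) = Suc i then (\<Sum>k=mx (c i)..i. a k) else 0) + (\<Sum>k=mx (c m)..m. a k) = (\<Sum>k=1..m. a k)"
proof (induction m)
  case 0 then show ?case by simp
next
  case (Suc m)
  show ?case
  proof (cases "m = 0")
    case True
    have "c 1 \<le> 1" using cl by blast
    then have "mx (c 1) = 1" by (simp add: mx_def)
    then show ?thesis using True by simp
  next
    case False
    then have m1: "1 \<le> m" by simp
    have IH: "(\<Sum>i=1..m-1. if c (Suc i) = Suc i then (\<Sum>k=mx (c i)..i. a k) else 0) + (\<Sum>k=mx (c m)..m. a k) = (\<Sum>k=1..m. a k)"
      using Suc m1 by simp
    have split: "(\<Sum>i=1..Suc m - 1. if c (Suc i) = Suc i then (\<Sum>k=mx (c i)..i. a k) else 0)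
        = (\<Sum>i=1..m-1. if c (Suc i) = Suc i then (\<Sum>k=mx (c i)..i. a k) else 0)
          + (if c (Suc m) = Suc m then (\<Sum>k=mx (c m)..m. a k) else 0)"
    proof -
      have "{1..m} = insert m {1..m-1}" using m1 by auto
      moreover have "m \<notin> {1..m-1}" using m1 by auto
      ultimately show ?thesis by (simp add: add.commute)
    qed
    have mxm: "mx (c m) \<le> m" using cl m1 by (auto simp: mx_def)
    show ?thesis
    proof (cases "c (Suc m) = Suc m")
      case True
      then have "mx (c (Suc m)) = Suc m" by (simp add: mx_def)
      then show ?thesis unfolding split using IH True by simp
    next
      case False
      then have "c (Suc m) = c m" using v Suc.prems(2) unfolding cvalid_def by force
      then have "(\<Sum>k=mx (c (Suc m))..Suc m. a k) = (\<Sum>k=mx (c m)..m. a k) + a (Suc m)"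
        using mxm by simp
      then show ?thesis unfolding split using IH False by simp
    qed
  qed
qed

context cpm
begin

lemma AE_valid_Pr: "AE \<omega> in Pr. cvalid n (fst \<omega>)"
proof (rule AE_I')
  let ?V = "{\<omega>\<in>space Pr. \<not> cvalid n (fst \<omega>)}"
  have mc: "(\<lambda>\<omega>. cvalid n (fst \<omega>)) \<in> measurable Pr (count_space UNIV)"
  proof (rule meas_Pr)
    fix c assume "c \<in> P"
    show "(\<lambda>z. cvalid n (fst (c, z))) \<in> measurable PZ (count_space UNIV)"
      unfolding fst_conv by (rule measurable_const) simp
  qed
  have Veq: "?V = (\<lambda>\<omega>. cvalid n (fst \<omega>)) -` {False} \<inter> space Pr" by blast
  have Vm: "?V \<in> sets Pr" unfolding Veq by (rule measurable_sets[OF mc]) simp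
  have "emeasure Pr ?V = (\<integral>\<^sup>+\<omega>. indicator ?V \<omega> \<partial>Pr)" using Vm by simp
  also have "\<dots> = (\<Sum>c\<in>P. ennreal (pp c) * (\<integral>\<^sup>+z. indicator ?V (c, z) \<partial>PZ))"
    by (rule nn_Pr) (use Vm in simp)
  also have "\<dots> = 0"
  proof (rule sum.neutral, rule ballI)
    fix c assume c: "c \<in> P"
    show "ennreal (pp c) * (\<integral>\<^sup>+z. indicator ?V (c, z) \<partial>PZ) = 0"
    proof (cases "cvalid n c")
      case True
      then have "(\<integral>\<^sup>+z. indicator ?V (c, z) \<partial>PZ) = (\<integral>\<^sup>+z. 0 \<partial>PZ)"
        by (intro nn_integral_cong) (simp add: indicator_def)
      then show ?thesis by simp
    next
      case False
      then have "pp c = 0" using path_prob_valid by blast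
      then show ?thesis by simp
    qed
  qed
  finally show "?V \<in> null_sets Pr" using Vm by (simp add: null_sets_def)
qed (simp)

lemma AE_valid_post:
  assumes goodn: "0 < emeasure (W n) (space (W n))"
  shows "AE \<omega> in post n. cvalid n (fst \<omega>)"
proof -
  have lm: "(\<lambda>\<omega>. ennreal (cp_lik p y n \<omega>)) \<in> borel_measurable Pr" using meas_lik[of n] by measurable
  have "AE \<omega> in Pr. 0 < ennreal (cp_lik p y n \<omega>) \<longrightarrow> cvalid n (fst \<omega>)"
    using AE_valid_Pr by (rule AE_mp) (rule AE_I2, simp)
  then have a1: "AE \<omega> in W n. cvalid n (fst \<omega>)"
    unfolding W_def by (simp only: AE_density[OF lm])
  have cm: "(\<lambda>\<omega>. ennreal (1 / measure (W n) (space (W n)))) \<in> borel_measurable (W n)" by simp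
  have "AE \<omega> in W n. 0 < ennreal (1 / measure (W n) (space (W n))) \<longrightarrow> cvalid n (fst \<omega>)"
    using a1 by (rule AE_mp) (rule AE_I2, simp)
  then show ?thesis
    unfolding post_good[OF order_refl goodn] by (simp only: AE_density[OF cm])
qed

lemma pointwise:
  fixes Tf :: "'x \<Rightarrow> nat \<Rightarrow> real"
  assumes c: "c \<in> P" and v: "cvalid n c" and z: "z \<in> space PZ"
  shows "(\<Sum>i=1..n-1. \<Sum>j=0..i. indicator (cp_event q J n i j \<inter> cp_event q J n (Suc i) (Suc i)) (c, z) * (\<Sum>k=max j 1..i. Tf (cpX i (c, z)) k))
       + (\<Sum>j=0..n. indicator (cp_event q J n n j) (c, z) * (\<Sum>k=max j 1..n. Tf (cpX n (c, z)) k))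
       = (\<Sum>k=1..n. Tf (cpX k (c, z)) k)"
proof -
  have cl: "\<forall>k. c k \<le> k" using cp_paths_le[OF c] by blast
  define a where "a k = Tf (z (mx (c k))) k" for k
  have seg: "(\<Sum>k=max (c i) 1..i. Tf (cpX i (c, z)) k) = (\<Sum>k=mx (c i)..i. a k)" if "i \<le> n" for i
  proof -
    have "(\<Sum>k=max (c i) 1..i. Tf (cpX i (c, z)) k) = (\<Sum>k=mx (c i)..i. Tf (z (mx (c i))) k)"
      by (simp add: cpX_eq mx_def)
    also have "\<dots> = (\<Sum>k=mx (c i)..i. a k)"
      unfolding a_def
    proof (rule sum.cong[OF refl])
      fix k assume k: "k \<in> {mx (c i)..i}"
      then have "mx (c k) = mx (c i)" using seg_same[OF v cl that, of k] by simp
      then show "Tf (z (mx (c i))) k = Tf (z (mx (c k))) k" by simp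
    qed
    finally show ?thesis .
  qed
  have inner: "(\<Sum>j=0..i. indicator (cp_event q J n i j \<inter> cp_event q J n (Suc i) (Suc i)) (c, z) * (\<Sum>k=max j 1..i. Tf (cpX i (c, z)) k))
      = (if c (Suc i) = Suc i then (\<Sum>k=mx (c i)..i. a k) else 0)" if i: "i \<le> n" for i
  proof -
    have "(\<Sum>j=0..i. indicator (cp_event q J n i j \<inter> cp_event q J n (Suc i) (Suc i)) (c, z) * (\<Sum>k=max j 1..i. Tf (cpX i (c, z)) k))
        = (\<Sum>j=0..i. if c i = j then (if c (Suc i) = Suc i then (\<Sum>k=max j 1..i. Tf (cpX i (c, z)) k) else 0) else 0)"
      by (intro sum.cong refl) (simp add: indicator_inter_arith ind_event[OF c z])
    also have "\<dots> = (if c (Suc i) = Suc i then (\<Sum>k=max (c i) 1..i. Tf (cpX i (c, z)) k) else 0)"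
      using cl by (subst sum.delta') auto
    finally show ?thesis using seg[OF i] by simp
  qed
  have last: "(\<Sum>j=0..n. indicator (cp_event q J n n j) (c, z) * (\<Sum>k=max j 1..n. Tf (cpX n (c, z)) k)) = (\<Sum>k=mx (c n)..n. a k)"
  proof -
    have "(\<Sum>j=0..n. indicator (cp_event q J n n j) (c, z) * (\<Sum>k=max j 1..n. Tf (cpX n (c, z)) k))
        = (\<Sum>j=0..n. if c n = j then (\<Sum>k=max j 1..n. Tf (cpX n (c, z)) k) else 0)"
      by (intro sum.cong refl) (simp add: ind_event[OF c z])
    also have "\<dots> = (\<Sum>k=max (c n) 1..n. Tf (cpX n (c, z)) k)"
      using cl by (subst sum.delta') auto
    finally show ?thesis using seg[of n] by simp
  qed
  have "(\<Sum>i=1..n-1. \<Sum>j=0..i. indicator (cp_event q J n i j \<inter> cp_event q J n (Suc i) (Suc i)) (c, z) * (\<Sum>k=max j 1..i. Tf (cpX i (c, z)) k))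
      = (\<Sum>i=1..n-1. if c (Suc i) = Suc i then (\<Sum>k=mx (c i)..i. a k) else 0)"
    by (intro sum.cong refl inner) auto
  moreover have "(\<Sum>k=1..n. Tf (cpX k (c, z)) k) = (\<Sum>k=1..n. a k)"
    by (simp add: a_def cpX_eq mx_def)
  ultimately show ?thesis unfolding last using partition_sum[OF v cl npos order_refl] by simp
qed

end

theorem mainTheorem19:
  fixes J :: "'x measure" and \<psi> :: "'y measure" and q :: "nat \<Rightarrow> nat \<Rightarrow> real"
    and n v :: nat and y :: "nat \<Rightarrow> 'y"
    and f :: "'y \<Rightarrow> 'x \<Rightarrow> 'th \<Rightarrow> real"
    and \<Theta> :: "'th set" and \<theta>old :: 'th and \<theta> :: 'th
    and \<eta> :: "'th \<Rightarrow> nat \<Rightarrow> real" and A :: "'th \<Rightarrow> real" and T :: "nat \<Rightarrow> 'x \<Rightarrow> 'y \<Rightarrow> real"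
  defines "p \<equiv> (\<lambda>yy x. exp (f yy x \<theta>old))"
  defines "obar \<equiv> (\<lambda>l j i. integral\<^sup>L (cp_H q J p y n j i) (\<lambda>x. \<Sum>k=(max j 1)..i. T l x (y k)))"
  defines "Obj \<equiv> (\<lambda>th. real n * A th + (\<Sum>l=1..v. \<eta> th l *
             ((\<Sum>i=1..n-1. \<Sum>j=0..i. cp_ctil q J p y n j i * cp_qtil q J p y n (i + 1) * obar l j i)
              + (\<Sum>j=0..n. cp_ctil q J p y n j n * obar l j n))))"
  defines "CondExp \<equiv> (\<lambda>th. integral\<^sup>L (cp_post q J p y n n) (\<lambda>\<omega>. \<Sum>i=1..n. f (y i) (cpX i \<omega>) th))"
  assumes n_pos: "n \<ge> 1"
    and J_prob: "prob_space J"
    and psi_sf: "sigma_finite_measure \<psi>"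
    and y_in: "\<forall>k\<in>{1..n}. y k \<in> space \<psi>"
    and q_range: "\<forall>i j. j < i \<and> i \<le> n \<longrightarrow> 0 \<le> q j i \<and> q j i \<le> 1"
    and \<theta>old_in: "\<theta>old \<in> \<Theta>"
    and T_meas: "\<forall>l\<in>{1..v}. (\<lambda>(x, yy). T l x yy) \<in> borel_measurable (J \<Otimes>\<^sub>M \<psi>)"
    and f_form: "\<forall>th\<in>\<Theta>. \<forall>x\<in>space J. \<forall>yy\<in>space \<psi>.
                   f yy x th = (\<Sum>l=1..v. \<eta> th l * T l x yy) + A th"
    and f_density: "\<forall>th\<in>\<Theta>. \<forall>x\<in>space J. (\<integral>\<^sup>+ yy. ennreal (exp (f yy x th)) \<partial>\<psi>) = 1"
    and seg_pos: "\<forall>j i. 0 < j \<and> j \<le> i \<and> i \<le> n \<longrightarrow>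
                   0 < (\<integral>\<^sup>+ x. ennreal (\<Prod>l=j..i. p (y l) x) \<partial>J)"
    and seg_fin: "\<forall>j i. 0 < j \<and> j \<le> i \<and> i \<le> n \<longrightarrow>
                   (\<integral>\<^sup>+ x. ennreal (\<Prod>l=j..i. p (y l) x) \<partial>J) < \<infinity>"
    and int_H: "\<forall>l\<in>{1..v}. \<forall>i\<in>{1..n}. \<forall>j\<le>i. \<forall>k\<in>{(max j 1)..i}.
                   integrable (cp_H q J p y n j i) (\<lambda>x. T l x (y k))"
    and int_post: "\<forall>l\<in>{1..v}. \<forall>i\<in>{1..n}.
                   integrable (cp_post q J p y n n) (\<lambda>\<omega>. T l (cpX i \<omega>) (y i))"
    and \<theta>_in: "\<theta> \<in> \<Theta>"
    and \<theta>_max: "\<forall>th\<in>\<Theta>. Obj th \<le> Obj \<theta>"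
  shows "\<forall>th\<in>\<Theta>. CondExp th \<le> CondExp \<theta>"
proof -
  have Tm: "(\<lambda>x. T l x (y k)) \<in> borel_measurable J" if l: "l \<in> {1..v}" and k: "k \<in> {1..n}" for l k
  proof -
    have "(\<lambda>x. (x, y k)) \<in> measurable J (J \<Otimes>\<^sub>M \<psi>)"
      using y_in k by (intro measurable_Pair measurable_ident_sets measurable_const) auto
    from measurable_compose[OF this T_meas[rule_format, OF l]] show ?thesis by simp
  qed
  have feq: "f (y k) x th = (\<Sum>l=1..v. \<eta> th l * T l x (y k)) + A th"
    if "th \<in> \<Theta>" "x \<in> space J" "k \<in> {1..n}" for k x th
    using f_form that y_in by blast
  have pm: "p (y k) \<in> borel_measurable J" if k: "k \<in> {1..n}" for k
  proof -
    have s: "(\<lambda>x. \<Sum>l=1..v. \<eta> \<theta>old l * T l x (y k)) \<in> borel_measurable J"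
    proof (rule borel_measurable_sum)
      fix l assume l: "l \<in> {1..v}"
      have "(\<lambda>x. T l x (y k)) \<in> borel_measurable J" by (rule Tm[OF l k])
      then show "(\<lambda>x. \<eta> \<theta>old l * T l x (y k)) \<in> borel_measurable J" by measurable
    qed
    then have m: "(\<lambda>x. exp ((\<Sum>l=1..v. \<eta> \<theta>old l * T l x (y k)) + A \<theta>old)) \<in> borel_measurable J"
      by measurable
    have eq: "p (y k) x = exp ((\<Sum>l=1..v. \<eta> \<theta>old l * T l x (y k)) + A \<theta>old)" if "x \<in> space J" for x
      using feq[OF \<theta>old_in that k] by (simp add: p_def)
    have "p (y k) \<in> borel_measurable J \<longleftrightarrow> (\<lambda>x. exp ((\<Sum>l=1..v. \<eta> \<theta>old l * T l x (y k)) + A \<theta>old)) \<in> borel_measurable J"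
      by (rule measurable_cong) (rule eq)
    then show ?thesis using m by simp
  qed
  have ppos': "\<And>k x. 0 < p (y k) x" by (simp add: p_def)
  interpret C: cpm q J p y n by (rule cpm.intro[where q=q and J=J and p=p and y=y and n=n, OF q_range J_prob pm ppos' seg_fin n_pos])
  show ?thesis
  proof (cases "0 < emeasure (C.W n) (space (C.W n))")
    case False
    then have z: "emeasure (C.W n) (space (C.W n)) = 0" by (simp add: zero_less_iff_neq_zero)
    have "cp_post q J p y n n = null_measure (C.W n)"
      unfolding C.post_eq by (rule cond_null) (use z in auto)
    then have "CondExp th = 0" for th unfolding CondExp_def by simp
    then show ?thesis by simp
  next
    case True
    note goodn = True
    let ?Pn = "cp_post q J p y n n"
    interpret Pn: prob_space ?Pn by (rule C.post_prob[OF order_refl goodn])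
    have Xm: "cpX k \<in> measurable ?Pn J" if "k \<in> {1..n}" for k by (intro C.meas_post C.meas_cpX that)
    have Xsp: "cpX k \<omega> \<in> space J" if "k \<in> {1..n}" "\<omega> \<in> space ?Pn" for k \<omega>
      using measurable_space[OF Xm[OF that(1)] that(2)] .
    have intT: "integrable ?Pn (\<lambda>\<omega>. T l (cpX k \<omega>) (y k))" if "l \<in> {1..v}" "k \<in> {1..n}" for l k
      using int_post that by blast
    have TXm: "(\<lambda>\<omega>. T l (cpX k \<omega>) (y k)) \<in> borel_measurable ?Pn" if "l \<in> {1..v}" "k \<in> {1..n}" for l k
      using measurable_compose[OF Xm[OF that(2)] Tm[OF that]] by simp
    define S where "S l = (\<integral>\<omega>. (\<Sum>k=1..n. T l (cpX k \<omega>) (y k)) \<partial>?Pn)" for l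
    have CE: "CondExp th = real n * A th + (\<Sum>l=1..v. \<eta> th l * S l)" if th: "th \<in> \<Theta>" for th
    proof -
      have "CondExp th = (\<integral>\<omega>. (\<Sum>l=1..v. \<eta> th l * (\<Sum>k=1..n. T l (cpX k \<omega>) (y k))) + real n * A th \<partial>?Pn)"
        unfolding CondExp_def
      proof (rule Bochner_Integration.integral_cong[OF refl])
        fix \<omega> assume \<omega>: "\<omega> \<in> space ?Pn"
        have "(\<Sum>i=1..n. f (y i) (cpX i \<omega>) th) = (\<Sum>i=1..n. (\<Sum>l=1..v. \<eta> th l * T l (cpX i \<omega>) (y i)) + A th)"
          by (rule sum.cong[OF refl], rule feq[OF th Xsp[OF _ \<omega>]]) auto
        also have "\<dots> = (\<Sum>l=1..v. \<eta> th l * (\<Sum>k=1..n. T l (cpX k \<omega>) (y k))) + real n * A th"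
          by (simp add: sum.distrib sum_distrib_left) (rule sum.swap)
        finally show "(\<Sum>i=1..n. f (y i) (cpX i \<omega>) th) = (\<Sum>l=1..v. \<eta> th l * (\<Sum>k=1..n. T l (cpX k \<omega>) (y k))) + real n * A th" .
      qed
      also have "\<dots> = (\<integral>\<omega>. (\<Sum>l=1..v. \<eta> th l * (\<Sum>k=1..n. T l (cpX k \<omega>) (y k))) \<partial>?Pn) + real n * A th"
      proof -
        have i1: "integrable ?Pn (\<lambda>\<omega>. \<Sum>l=1..v. \<eta> th l * (\<Sum>k=1..n. T l (cpX k \<omega>) (y k)))"
          by (rule Bochner_Integration.integrable_sum, rule integrable_mult_right, rule Bochner_Integration.integrable_sum, rule intT) auto
        have "(\<integral>\<omega>. (\<Sum>l=1..v. \<eta> th l * (\<Sum>k=1..n. T l (cpX k \<omega>) (y k))) + real n * A th \<partial>?Pn)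
            = (\<integral>\<omega>. (\<Sum>l=1..v. \<eta> th l * (\<Sum>k=1..n. T l (cpX k \<omega>) (y k))) \<partial>?Pn) + (\<integral>\<omega>. real n * A th \<partial>?Pn)"
          by (rule Bochner_Integration.integral_add[OF i1]) simp
        then show ?thesis using Pn.prob_space by simp
      qed
      also have "(\<integral>\<omega>. (\<Sum>l=1..v. \<eta> th l * (\<Sum>k=1..n. T l (cpX k \<omega>) (y k))) \<partial>?Pn) = (\<Sum>l=1..v. \<eta> th l * S l)"
        unfolding S_def by (subst Bochner_Integration.integral_sum) (auto intro!: integrable_mult_right Bochner_Integration.integrable_sum intT)
      finally show ?thesis by simp
    qed
    have AEv: "AE \<omega> in ?Pn. cvalid n (fst \<omega>)" by (rule C.AE_valid_post[OF goodn])
    have evs: "cp_event q J n i j \<in> sets ?Pn" for i j by (simp add: C.sets_post C.event_sets)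
    have coef: "S l = (\<Sum>i=1..n-1. \<Sum>j=0..i. cp_ctil q J p y n j i * cp_qtil q J p y n (i + 1) * obar l j i)
        + (\<Sum>j=0..n. cp_ctil q J p y n j n * obar l j n)" if l: "l \<in> {1..v}" for l
    proof -
      define g where "g i j x = (\<Sum>k=max j 1..i. T l x (y k))" for i j x
      have gm: "g i j \<in> borel_measurable J" if "i \<le> n" for i j
        unfolding g_def by (rule borel_measurable_sum) (rule Tm[OF l], use that in auto)
      have ob: "obar l j i = (\<integral>x. g i j x \<partial>cp_H q J p y n j i)" for i j unfolding obar_def g_def ..
      define hL where "hL i j \<omega> = indicator (cp_event q J n i j \<inter> cp_event q J n (Suc i) (Suc i)) \<omega> * g i j (cpX i \<omega>)" for i j \<omega>
      define hN where "hN j \<omega> = indicator (cp_event q J n n j) \<omega> * g n j (cpX n \<omega>)" for j \<omega>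
      have K1: "cp_ctil q J p y n j i * cp_qtil q J p y n (i + 1) * obar l j i = (\<integral>\<omega>. hL i j \<omega> \<partial>?Pn)"
        if "i \<in> {1..n-1}" "j \<in> {0..i}" for i j
        unfolding ob hL_def by (rule C.key_lt) (use that gm goodn in auto)
      have K2: "cp_ctil q J p y n j n * obar l j n = (\<integral>\<omega>. hN j \<omega> \<partial>?Pn)" for j
        unfolding ob hN_def by (rule C.key_eq[OF gm[OF order_refl] goodn])
      have hint: "integrable ?Pn (\<lambda>\<omega>. indicator B \<omega> * g i j (cpX i \<omega>))"
        if i: "i \<in> {1..n}" and B: "B \<in> sets ?Pn" "B \<subseteq> cp_event q J n i j" for i j B
      proof -
        have int': "integrable ?Pn (\<lambda>\<omega>. \<Sum>k=max j 1..i. T l (cpX k \<omega>) (y k) * indicator B \<omega>)"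
          by (intro Bochner_Integration.integrable_sum integrable_real_mult_indicator[OF B(1)] intT l) (use i in auto)
        have meas: "(\<lambda>\<omega>. indicator B \<omega> * g i j (cpX i \<omega>)) \<in> borel_measurable ?Pn"
        proof -
          have gi: "g i j \<in> borel_measurable J" using gm[of i j] i by simp
          show ?thesis using measurable_compose[OF Xm[OF i] gi] B(1) by measurable
        qed
        have "AE \<omega> in ?Pn. (\<Sum>k=max j 1..i. T l (cpX k \<omega>) (y k) * indicator B \<omega>) = indicator B \<omega> * g i j (cpX i \<omega>)"
          using AEv
        proof (rule AE_mp, intro AE_I2 impI)
          fix \<omega> assume \<omega>: "\<omega> \<in> space ?Pn" and v: "cvalid n (fst \<omega>)"
          show "(\<Sum>k=max j 1..i. T l (cpX k \<omega>) (y k) * indicator B \<omega>) = indicator B \<omega> * g i j (cpX i \<omega>)"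
          proof (cases "\<omega> \<in> B")
            case True
            then have ci: "fst \<omega> i = j" using B(2) by (auto simp: cp_event_def cpC_def)
            have c: "fst \<omega> \<in> cp_paths n" using \<omega> by (auto simp: C.space_post C.space_Pr)
            have cl: "\<forall>k. fst \<omega> k \<le> k" using cp_paths_le[OF c] by blast
            have "(\<Sum>k=max j 1..i. T l (cpX k \<omega>) (y k)) = (\<Sum>k=max j 1..i. T l (cpX i \<omega>) (y k))"
            proof (rule sum.cong[OF refl])
              fix k assume k: "k \<in> {max j 1..i}"
              have "mx (fst \<omega> k) = mx (fst \<omega> i)"
                by (rule seg_same[OF v cl]) (use i k ci in \<open>auto simp: mx_def\<close>)
              then show "T l (cpX k \<omega>) (y k) = T l (cpX i \<omega>) (y k)" by (simp add: C.cpX_eq)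
            qed
            then show ?thesis using True by (simp add: g_def)
          qed simp
        qed
        then show ?thesis by (rule integrable_cong_AE_imp[OF int' meas])
      qed
      have hLi: "integrable ?Pn (hL i j)" if "i \<in> {1..n-1}" for i j
        unfolding hL_def by (rule hint) (use that evs in auto)
      have hNi: "integrable ?Pn (hN j)" for j
        unfolding hN_def by (rule hint) (use evs n_pos in auto)
      have "S l = (\<integral>\<omega>. (\<Sum>i=1..n-1. \<Sum>j=0..i. hL i j \<omega>) + (\<Sum>j=0..n. hN j \<omega>) \<partial>?Pn)"
        unfolding S_def
      proof (rule integral_cong_AE)
        show "(\<lambda>\<omega>. \<Sum>k=1..n. T l (cpX k \<omega>) (y k)) \<in> borel_measurable ?Pn"
          by (rule borel_measurable_sum) (rule TXm[OF l], auto)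
        show "(\<lambda>\<omega>. (\<Sum>i=1..n-1. \<Sum>j=0..i. hL i j \<omega>) + (\<Sum>j=0..n. hN j \<omega>)) \<in> borel_measurable ?Pn"
          using hLi hNi by (intro borel_measurable_add borel_measurable_sum) (auto dest: borel_measurable_integrable)
        show "AE \<omega> in ?Pn. (\<Sum>k=1..n. T l (cpX k \<omega>) (y k)) = (\<Sum>i=1..n-1. \<Sum>j=0..i. hL i j \<omega>) + (\<Sum>j=0..n. hN j \<omega>)"
          using AEv
        proof (rule AE_mp, intro AE_I2 impI)
          fix \<omega> assume \<omega>: "\<omega> \<in> space ?Pn" and v: "cvalid n (fst \<omega>)"
          have c: "fst \<omega> \<in> cp_paths n" and z: "snd \<omega> \<in> space C.PZ" using \<omega> by (auto simp: C.space_post C.space_Pr)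
          have "(\<Sum>i=1..n-1. \<Sum>j=0..i. hL i j (fst \<omega>, snd \<omega>)) + (\<Sum>j=0..n. hN j (fst \<omega>, snd \<omega>))
              = (\<Sum>k=1..n. T l (cpX k (fst \<omega>, snd \<omega>)) (y k))"
            unfolding hL_def hN_def g_def by (rule C.pointwise[OF c v z])
          then show "(\<Sum>k=1..n. T l (cpX k \<omega>) (y k)) = (\<Sum>i=1..n-1. \<Sum>j=0..i. hL i j \<omega>) + (\<Sum>j=0..n. hN j \<omega>)"
            by simp
        qed
      qed
      also have "\<dots> = (\<Sum>i=1..n-1. \<Sum>j=0..i. (\<integral>\<omega>. hL i j \<omega> \<partial>?Pn)) + (\<Sum>j=0..n. (\<integral>\<omega>. hN j \<omega> \<partial>?Pn))"
      proof -
        have iL1: "integrable ?Pn (\<lambda>\<omega>. \<Sum>j=0..i. hL i j \<omega>)" if "i \<in> {1..n-1}" for i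
          by (rule Bochner_Integration.integrable_sum, rule hLi[OF that])
        have iL: "integrable ?Pn (\<lambda>\<omega>. \<Sum>i=1..n-1. \<Sum>j=0..i. hL i j \<omega>)"
          by (rule Bochner_Integration.integrable_sum, rule iL1)
        have iN: "integrable ?Pn (\<lambda>\<omega>. \<Sum>j=0..n. hN j \<omega>)"
          by (rule Bochner_Integration.integrable_sum, rule hNi)
        have "(\<integral>\<omega>. (\<Sum>i=1..n-1. \<Sum>j=0..i. hL i j \<omega>) + (\<Sum>j=0..n. hN j \<omega>) \<partial>?Pn)
            = (\<integral>\<omega>. (\<Sum>i=1..n-1. \<Sum>j=0..i. hL i j \<omega>) \<partial>?Pn) + (\<integral>\<omega>. (\<Sum>j=0..n. hN j \<omega>) \<partial>?Pn)"
          by (rule Bochner_Integration.integral_add[OF iL iN])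
        also have "(\<integral>\<omega>. (\<Sum>i=1..n-1. \<Sum>j=0..i. hL i j \<omega>) \<partial>?Pn) = (\<Sum>i=1..n-1. (\<integral>\<omega>. (\<Sum>j=0..i. hL i j \<omega>) \<partial>?Pn))"
          by (rule Bochner_Integration.integral_sum, rule iL1)
        also have "\<dots> = (\<Sum>i=1..n-1. \<Sum>j=0..i. (\<integral>\<omega>. hL i j \<omega> \<partial>?Pn))"
          by (intro sum.cong refl Bochner_Integration.integral_sum hLi) 
        also have "(\<integral>\<omega>. (\<Sum>j=0..n. hN j \<omega>) \<partial>?Pn) = (\<Sum>j=0..n. (\<integral>\<omega>. hN j \<omega> \<partial>?Pn))"
          by (rule Bochner_Integration.integral_sum, rule hNi)
        finally show ?thesis .
      qed
      also have "\<dots> = (\<Sum>i=1..n-1. \<Sum>j=0..i. cp_ctil q J p y n j i * cp_qtil q J p y n (i + 1) * obar l j i)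
          + (\<Sum>j=0..n. cp_ctil q J p y n j n * obar l j n)"
        using K1 K2 by simp
      finally show ?thesis .
    qed
    have "CondExp th = Obj th" if "th \<in> \<Theta>" for th
      unfolding CE[OF that] Obj_def using coef by simp
    then show ?thesis using \<theta>_max \<theta>_in by simp
  qed
qed

end
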